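(* Let $\tau:E\to\mathbb{R}$ be a fibre bundle with $\dim E=n+1$, let $J^1\tau^*$ be the dual of its first jet bundle, and let $R$ be a type $(1,1)$ tensor field on $E$ with $R(dt)=0$. Let $\widetilde{R}$ be the complete lift of $R$ to $J^1\tau^*$ and let $P$ be the canonical Poisson map on $J^1\tau^*$. Then $(P,\widetilde{R})$ is a Poisson–Nijenhuis structure on $J^1\tau^*$ if and only if $N_R=0$, where $N_R$ is the Nijenhuis torsion of $R$.
   Context: Setting: $\tau:E\to\mathbb{R}$ is a fibre bundle, $\dim E=n+1$, with adapted local coordinates $(t,q^i)$, $i=1,\dots,n$ ($t$ the coordinate of $\mathbb{R}$); allowed coordinate changes are $t\mapsto t$, $q^i\mapsto Q^i(t,q)$. The manifold $J^1\tau^*$ is the quotient $T^*E/\langle dt\rangle$: a point over $x\in E$ is a class of covectors at $x$ modulo multiples of $dt_x$; $\pi:J^1\tau^*\to E$ is the projection. Induced coordinates are $(t,q^i,p_i)$, meaning the class is represented by $p_i\,dq^i$; under $Q^i=Q^i(t,q)$ one has $P_j=p_i\,\partial q^i/\partial Q^j$. A $(1,1)$ tensor acts on 1-forms by the adjoint: $\langle R(X),\alpha\rangle=\langle X,R(\alpha)\rangle$. $R(dt)=0$ means that locally $R=R^i_j(t,q)\,\partial_{q^i}\otimes dq^j+R^i_0(t,q)\,\partial_{q^i}\otimes dt$. Complete lift: $\widetilde{R}$ is the $(1,1)$ tensor field on $J^1\tau^*$ given in coordinates by $\widetilde{R}=R^i_j\big(\partial_{q^i}\otimes dq^j+\partial_{p_j}\otimes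 dp_i\big)+R^i_0\,\partial_{q^i}\otimes dt+p_i\big(\tfrac{\partial R^i_j}{\partial q^k}-\tfrac{\partial R^i_k}{\partial q^j}\big)\partial_{p_j}\otimes dq^k+p_i\big(\tfrac{\partial R^i_k}{\partial t}-\tfrac{\partial R^i_0}{\partial q^k}\big)\partial_{p_k}\otimes dt$ (this is well defined). Canonical Poisson structure: the bivector $\Lambda=\partial_{q^i}\wedge\partial_{p_i}$ on $J^1\tau^*$ (the Poisson structure induced from the canonical one on $T^*E$ via the projection $T^*E\to J^1\tau^*$), i.e. $\{F,G\}=\frac{\partial F}{\partial q^i}\frac{\partial G}{\partial p_i}-\frac{\partial F}{\partial p_i}\frac{\partial G}{\partial q^i}$; the Poisson map $P$ from 1-forms to vector fields is defined by $\Lambda(\alpha,\beta)=\langle P(\alpha),\beta\rangle$. Nijenhuis torsion of a $(1,1)$ tensor $S$: $N_S(X,Y)=[SX,SY]+S^2[X,Y]-S[SX,Y]-S[X,SY]$. Poisson–Nijenhuis structure: a pair $(P,N)$ with $P$ a Poisson map and $N$ a $(1,1)$ tensor such that $P\circ N=N\circ P$ (with $N$ acting on 1-forms by its adjoint), $N_N=0$, and the Magri–Morosi concomitant $\mu_{N,P}(\sigma,Z):=(\mathcal{L}_{P(\sigma)}N)(Z)-P\big(\mathcal{L}_Z(N(\sigma))\big)+P\big(\mathcal{L}_{N(Z)}\sigma\big)$ vanishes for all 1-forms $\sigma$ and vector fields $Z$. *)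

theory Defs
  imports "HOL-Analysis.Analysis"
begin

text \<open>Local coordinate calculus on an open set U of a Euclidean space 'x.  Vector fields and
  1-forms are both represented as maps 'x \<Rightarrow> 'x (a 1-form sigma has components
  sigma x \<bullet> b, b \<in> Basis).  A (1,1) tensor field S is represented by its
  action on vectors, S x v.\<close>

type_synonym 'x vfield = "'x \<Rightarrow> 'x"
type_synonym 'x oneform = "'x \<Rightarrow> 'x"
type_synonym 'x tensor11 = "'x \<Rightarrow> 'x \<Rightarrow> 'x"

definition D :: "('a::real_normed_vector \<Rightarrow> 'b::real_normed_vector) \<Rightarrow> 'a \<Rightarrow> 'a \<Rightarrow> 'b" where
  "D F x v = frechet_derivative F (at x) v"

fun Ck :: "nat \<Rightarrow> 'a::real_normed_vector set \<Rightarrow> ('a \<Rightarrow> 'b::real_normed_vector) \<Rightarrow> bool" where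
  "Ck 0 U f = continuous_on U f"
| "Ck (Suc k) U f = ((\<forall>x\<in>U. f differentiable (at x)) \<and> (\<forall>v. Ck k U (\<lambda>x. D f x v)))"

definition smooth_on :: "'a::real_normed_vector set \<Rightarrow> ('a \<Rightarrow> 'b::real_normed_vector) \<Rightarrow> bool" where
  "smooth_on U f = (\<forall>k. Ck k U f)"

definition lie_bracket :: "'x::euclidean_space vfield \<Rightarrow> 'x vfield \<Rightarrow> 'x vfield" where
  "lie_bracket X Y x = D Y x (X x) - D X x (Y x)"

definition tadj :: "'x::euclidean_space tensor11 \<Rightarrow> 'x \<Rightarrow> 'x \<Rightarrow> 'x" where
  "tadj S x \<alpha> = (\<Sum>b\<in>Basis. (\<alpha> \<bullet> S x b) *\<^sub>R b)"

definition tv :: "'x::euclidean_space tensor11 \<Rightarrow> 'x vfield \<Rightarrow> 'x vfield" where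
  "tv S X x = S x (X x)"

definition tf :: "'x::euclidean_space tensor11 \<Rightarrow> 'x oneform \<Rightarrow> 'x oneform" where
  "tf S \<sigma> x = tadj S x (\<sigma> x)"

definition nijenhuis :: "'x::euclidean_space tensor11 \<Rightarrow> 'x vfield \<Rightarrow> 'x vfield \<Rightarrow> 'x vfield" where
  "nijenhuis S X Y =
     (\<lambda>x. lie_bracket (tv S X) (tv S Y) x + tv S (tv S (lie_bracket X Y)) x
          - tv S (lie_bracket (tv S X) Y) x - tv S (lie_bracket X (tv S Y)) x)"

definition lie_form :: "'x::euclidean_space vfield \<Rightarrow> 'x oneform \<Rightarrow> 'x oneform" where
  "lie_form X \<sigma> x = D \<sigma> x (X x) + (\<Sum>b\<in>Basis. (\<sigma> x \<bullet> D X x b) *\<^sub>R b)"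

definition lie_tensor_app :: "'x::euclidean_space vfield \<Rightarrow> 'x tensor11 \<Rightarrow> 'x vfield \<Rightarrow> 'x vfield" where
  "lie_tensor_app X S Z = (\<lambda>x. lie_bracket X (tv S Z) x - tv S (lie_bracket X Z) x)"

text \<open>A Poisson map P: P x alpha is the vector with Lambda(alpha,beta) = P x alpha \<bullet> beta.\<close>
definition pmap :: "('x::euclidean_space \<Rightarrow> 'x \<Rightarrow> 'x) \<Rightarrow> 'x oneform \<Rightarrow> 'x vfield" where
  "pmap P \<sigma> x = P x (\<sigma> x)"

definition grad :: "('x::euclidean_space \<Rightarrow> real) \<Rightarrow> 'x oneform" where
  "grad f x = (\<Sum>b\<in>Basis. D f x b *\<^sub>R b)"

definition pbracket :: "('x::euclidean_space \<Rightarrow> 'x \<Rightarrow> 'x) \<Rightarrow> ('x \<Rightarrow> real) \<Rightarrow> ('x \<Rightarrow> real) \<Rightarrow> 'x \<Rightarrow> real" where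
  "pbracket P f g x = P x (grad f x) \<bullet> grad g x"

definition is_poisson :: "'x::euclidean_space set \<Rightarrow> ('x \<Rightarrow> 'x \<Rightarrow> 'x) \<Rightarrow> bool" where
  "is_poisson U P =
     ((\<forall>x\<in>U. linear (P x) \<and> (\<forall>\<alpha> \<beta>. P x \<alpha> \<bullet> \<beta> = - (P x \<beta> \<bullet> \<alpha>))) \<and>
      (\<forall>f g h. smooth_on U f \<and> smooth_on U g \<and> smooth_on U h \<longrightarrow>
         (\<forall>x\<in>U. pbracket P f (pbracket P g h) x + pbracket P g (pbracket P h f) x
                 + pbracket P h (pbracket P f g) x = 0)))"

definition mm_concomitant :: "('x::euclidean_space \<Rightarrow> 'x \<Rightarrow> 'x) \<Rightarrow> 'x tensor11 \<Rightarrow> 'x oneform \<Rightarrow> 'x vfield \<Rightarrow> 'x vfield" where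
  "mm_concomitant P N \<sigma> Z =
     (\<lambda>x. lie_tensor_app (pmap P \<sigma>) N Z x - pmap P (lie_form Z (tf N \<sigma>)) x
          + pmap P (lie_form (tv N Z) \<sigma>) x)"

definition nijenhuis_zero :: "'x::euclidean_space set \<Rightarrow> 'x tensor11 \<Rightarrow> bool" where
  "nijenhuis_zero U S =
     (\<forall>X Y. smooth_on U X \<and> smooth_on U Y \<longrightarrow> (\<forall>x\<in>U. nijenhuis S X Y x = 0))"

definition poisson_nijenhuis :: "'x::euclidean_space set \<Rightarrow> ('x \<Rightarrow> 'x \<Rightarrow> 'x) \<Rightarrow> 'x tensor11 \<Rightarrow> bool" where
  "poisson_nijenhuis U P N =
     (is_poisson U P \<and>
      (\<forall>x\<in>U. \<forall>\<alpha>. P x (tadj N x \<alpha>) = N x (P x \<alpha>)) \<and>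
      nijenhuis_zero U N \<and>
      (\<forall>\<sigma> Z. smooth_on U \<sigma> \<and> smooth_on U Z \<longrightarrow> (\<forall>x\<in>U. mm_concomitant P N \<sigma> Z x = 0)))"

section \<open>The bundle E (coordinates (t,q)) and J^1 tau^* (coordinates (t,q,p))\<close>

definition dt_E :: "(real \<times> 'q::euclidean_space \<Rightarrow> real) \<Rightarrow> real \<times> 'q \<Rightarrow> real" where
  "dt_E f e = D f e (1, 0)"

definition dq_E :: "'q::euclidean_space \<Rightarrow> (real \<times> 'q \<Rightarrow> real) \<Rightarrow> real \<times> 'q \<Rightarrow> real" where
  "dq_E k f e = D f e (0, k)"

text \<open>The (1,1) tensor R = R^i_j d_{q^i} (x) dq^j + R^i_0 d_{q^i} (x) dt on E
  (the general form of a (1,1) tensor with R(dt) = 0), with components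
  Rc e i j = R^i_j, R0 e i = R^i_0 (i, j in Basis).\<close>
definition tensorE :: "(real \<times> 'q::euclidean_space \<Rightarrow> 'q \<Rightarrow> 'q \<Rightarrow> real) \<Rightarrow> (real \<times> 'q \<Rightarrow> 'q \<Rightarrow> real)
    \<Rightarrow> (real \<times> 'q) tensor11" where
  "tensorE Rc R0 e w =
     (0, (\<Sum>i\<in>Basis. ((\<Sum>j\<in>Basis. Rc e i j * (snd w \<bullet> j)) + R0 e i * fst w) *\<^sub>R i))"

definition J1_over :: "(real \<times> 'q::euclidean_space) set \<Rightarrow> (real \<times> 'q \<times> 'q) set" where
  "J1_over U = {z. (fst z, fst (snd z)) \<in> U}"

text \<open>Canonical Poisson map of Lambda = d_{q^i} /\ d_{p_i}: for alpha = (a0, aq, ap),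
  Lambda(alpha,beta) = aq.bp - ap.bq, so P(alpha) = (0, -ap, aq).\<close>
definition canonical_P :: "real \<times> 'q::euclidean_space \<times> 'q \<Rightarrow> real \<times> 'q \<times> 'q \<Rightarrow> real \<times> 'q \<times> 'q" where
  "canonical_P z \<alpha> = (0, - snd (snd \<alpha>), fst (snd \<alpha>))"

definition complete_lift :: "(real \<times> 'q::euclidean_space \<Rightarrow> 'q \<Rightarrow> 'q \<Rightarrow> real) \<Rightarrow> (real \<times> 'q \<Rightarrow> 'q \<Rightarrow> real)
    \<Rightarrow> (real \<times> 'q \<times> 'q) tensor11" where
  "complete_lift Rc R0 z w =
     (let t = fst z; q = fst (snd z); p = snd (snd z); e = (t, q);
          w0 = fst w; wq = fst (snd w); wp = snd (snd w) in
      (0,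
       (\<Sum>i\<in>Basis. ((\<Sum>j\<in>Basis. Rc e i j * (wq \<bullet> j)) + R0 e i * w0) *\<^sub>R i),
       (\<Sum>j\<in>Basis.
          ((\<Sum>i\<in>Basis. Rc e i j * (wp \<bullet> i))
           + (\<Sum>i\<in>Basis. \<Sum>k\<in>Basis.
                (p \<bullet> i) * (dq_E k (\<lambda>e'. Rc e' i j) e - dq_E j (\<lambda>e'. Rc e' i k) e) * (wq \<bullet> k))
           + (\<Sum>i\<in>Basis.
                (p \<bullet> i) * (dt_E (\<lambda>e'. Rc e' i j) e - dq_E j (\<lambda>e'. R0 e' i) e) * w0)) *\<^sub>R j)))"

end

theory Submission
  imports Defs
begin


lemma D_eq: "(f has_derivative f') (at x) \<Longrightarrow> D f x = f'"
  unfolding D_def using frechet_derivative_at by metis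

lemma D_works: "f differentiable (at x) \<Longrightarrow> (f has_derivative D f x) (at x)"
  unfolding D_def using frechet_derivative_works by blast

lemma D_linear: "f differentiable (at x) \<Longrightarrow> linear (D f x)"
  using D_works has_derivative_linear by blast

lemma dist_add_self: "dist x (x + y) = norm y"
  by (simp add: dist_norm)

lemma schwarz_aux:
  fixes g :: "'a::euclidean_space \<Rightarrow> real"
  assumes U: "open U" "x \<in> U" and dg: "\<forall>y\<in>U. g differentiable (at y)"
    and dG: "(\<lambda>y. D g y u) differentiable (at x)" and e: "e > 0"
  shows "\<exists>d>0. \<forall>s. 0 < s \<and> s < d \<longrightarrow>
     \<bar>(g (x + s *\<^sub>R u + s *\<^sub>R v) - g (x + s *\<^sub>R u) - g (x + s *\<^sub>R v) + g x) / s\<^sup>2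
        - D (\<lambda>y. D g y u) x v\<bar> \<le> e"
proof -
  define G where "G = (\<lambda>y. D g y u)"
  define L where "L = D G x"
  have GL: "(G has_derivative L) (at x)" using dG D_works unfolding G_def L_def by blast
  hence linL: "linear L" using has_derivative_linear by blast
  define K where "K = norm u + norm v + 1"
  have K: "K > 0" "norm u \<le> K" "norm v \<le> K" "norm u + norm v \<le> K" unfolding K_def
    using norm_ge_zero[of u] norm_ge_zero[of v] by linarith+
  define e' where "e' = e / (2 * K)"
  have e': "e' > 0" using e K unfolding e'_def by auto
  obtain d1 where d1: "d1 > 0" "\<forall>y. norm (y - x) < d1 \<longrightarrow> norm (G y - G x - L (y - x)) \<le> e' * norm (y - x)"
    using GL e' unfolding has_derivative_at_alt by blast
  obtain d0 where d0: "d0 > 0" "ball x d0 \<subseteq> U" using U open_contains_ball by blast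
  define d where "d = min d0 d1 / K"
  have d: "d > 0" using d0 d1 K unfolding d_def by auto
  show ?thesis
  proof (intro exI[of _ d] conjI allI impI)
    show "d > 0" by (rule d)
    fix s :: real assume s: "0 < s \<and> s < d"
    have sK: "s * K < min d0 d1" using s K unfolding d_def by (simp add: pos_less_divide_eq)
    have nb: "norm (r *\<^sub>R u + t *\<^sub>R v) < min d0 d1" if "0 \<le> r" "r \<le> s" "0 \<le> t" "t \<le> s" for r t
    proof -
      have "norm (r *\<^sub>R u + t *\<^sub>R v) \<le> r * norm u + t * norm v"
        using norm_triangle_ineq[of "r *\<^sub>R u" "t *\<^sub>R v"] that by simp
      also have "\<dots> \<le> s * norm u + s * norm v"
        using that by (intro add_mono mult_right_mono) auto
      also have "\<dots> \<le> s * K" using K s by (simp add: distrib_left[symmetric])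
      finally show ?thesis using sK by simp
    qed
    have inU: "x + (r *\<^sub>R u + t *\<^sub>R v) \<in> U" if "0 \<le> r" "r \<le> s" "0 \<le> t" "t \<le> s" for r t
    proof -
      have "norm (r *\<^sub>R u + t *\<^sub>R v) < d0" using nb[OF that] by simp
      hence "x + (r *\<^sub>R u + t *\<^sub>R v) \<in> ball x d0" by (simp only: mem_ball dist_add_self)
      thus ?thesis using d0(2) by blast
    qed
    define \<phi> where "\<phi> = (\<lambda>r. g (x + (r *\<^sub>R u + s *\<^sub>R v)) - g (x + (r *\<^sub>R u + 0 *\<^sub>R v)))"
    define \<phi>' where "\<phi>' = (\<lambda>r h. D g (x + (r *\<^sub>R u + s *\<^sub>R v)) (h *\<^sub>R u) - D g (x + (r *\<^sub>R u + 0 *\<^sub>R v)) (h *\<^sub>R u))"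
    have der: "(\<phi> has_derivative \<phi>' r) (at r within {0..s})" if "0 \<le> r" "r \<le> s" for r
    proof -
      have cmp: "((\<lambda>r. g (x + (r *\<^sub>R u + t *\<^sub>R v))) has_derivative (\<lambda>h. D g (x + (r *\<^sub>R u + t *\<^sub>R v)) (h *\<^sub>R u))) (at r)"
        if "0 \<le> t" "t \<le> s" for t
      proof -
        have "((\<lambda>r. x + (r *\<^sub>R u + t *\<^sub>R v)) has_derivative (\<lambda>h. h *\<^sub>R u)) (at r)"
          by (auto intro!: derivative_eq_intros)
        moreover have "(g has_derivative D g (x + (r *\<^sub>R u + t *\<^sub>R v))) (at (x + (r *\<^sub>R u + t *\<^sub>R v)))"
          using D_works dg inU[OF \<open>0 \<le> r\<close> \<open>r \<le> s\<close> that] by blast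
        ultimately show ?thesis using diff_chain_at[of _ _ r g] by (simp add: o_def)
      qed
      show ?thesis unfolding \<phi>_def \<phi>'_def
        by (rule has_derivative_at_withinI, rule has_derivative_diff; rule cmp) (use s in auto)
    qed
    obtain z where z: "z \<in> {0<..<s}" "\<phi> s - \<phi> 0 = \<phi>' z (s - 0)"
      using mvt_simple[of 0 s \<phi> \<phi>'] der s by auto
    have z0: "0 \<le> z" "z \<le> s" using z by auto
    define y1 where "y1 = x + (z *\<^sub>R u + s *\<^sub>R v)"
    define y2 where "y2 = x + (z *\<^sub>R u + 0 *\<^sub>R v)"
    have y1U: "y1 \<in> U" unfolding y1_def using inU[OF z0] s by auto
    have y2U: "y2 \<in> U" unfolding y2_def using inU[OF z0, of 0] s by auto
    have lin1: "D g y1 (s *\<^sub>R u) = s * G y1" unfolding G_def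
      using D_linear dg y1U linear_cmul by (metis real_scaleR_def)
    have lin2: "D g y2 (s *\<^sub>R u) = s * G y2" unfolding G_def
      using D_linear dg y2U linear_cmul by (metis real_scaleR_def)
    have delta: "g (x + s *\<^sub>R u + s *\<^sub>R v) - g (x + s *\<^sub>R u) - g (x + s *\<^sub>R v) + g x = s * (G y1 - G y2)"
    proof -
      have "\<phi> s - \<phi> 0 = s * (G y1 - G y2)" using z(2) lin1 lin2
        unfolding \<phi>'_def y1_def y2_def by (simp add: algebra_simps)
      thus ?thesis unfolding \<phi>_def by (simp add: add.assoc)
    qed
    have n1: "norm (y1 - x) < d1" unfolding y1_def using nb[OF z0, of s] s by auto
    have n2: "norm (y2 - x) < d1" unfolding y2_def using nb[OF z0, of 0] s by auto
    have b1: "norm (G y1 - G x - L (y1 - x)) \<le> e' * norm (y1 - x)" using d1(2) n1 by blast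
    have b2: "norm (G y2 - G x - L (y2 - x)) \<le> e' * norm (y2 - x)" using d1(2) n2 by blast
    have Ldiff: "L (y1 - x) - L (y2 - x) = s * L v"
      unfolding y1_def y2_def using linL
      by (simp add: linear_add linear_cmul linear_diff)
    have m1: "norm (y1 - x) \<le> s * K"
    proof -
      have "norm (y1 - x) \<le> z * norm u + s * norm v" unfolding y1_def
        using norm_triangle_ineq[of "z *\<^sub>R u" "s *\<^sub>R v"] z0 s by simp
      also have "\<dots> \<le> s * norm u + s * norm v" using z0 by (intro add_mono mult_right_mono) auto
      also have "\<dots> \<le> s * K" using K s by (simp add: distrib_left[symmetric])
      finally show ?thesis .
    qed
    have m2: "norm (y2 - x) \<le> s * K"
    proof -
      have "norm (y2 - x) \<le> s * norm u" unfolding y2_def using z0 by (simp add: mult_right_mono)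
      also have "\<dots> \<le> s * K" using K s by (simp add: mult_left_mono)
      finally show ?thesis .
    qed
    have "\<bar>(G y1 - G y2) - s * L v\<bar> \<le> e' * norm (y1 - x) + e' * norm (y2 - x)"
      using b1 b2 Ldiff by (simp add: abs_le_iff; linarith)
    also have "\<dots> \<le> e' * (s * K) + e' * (s * K)"
      using m1 m2 e' by (intro add_mono mult_left_mono) auto
    also have "\<dots> = s * e" unfolding e'_def using K by (simp add: field_simps)
    finally have main: "\<bar>(G y1 - G y2) - s * L v\<bar> \<le> s * e" .
    have "(g (x + s *\<^sub>R u + s *\<^sub>R v) - g (x + s *\<^sub>R u) - g (x + s *\<^sub>R v) + g x) / s\<^sup>2 - L v
        = ((G y1 - G y2) - s * L v) / s"
      using s unfolding delta by (simp add: field_simps power2_eq_square)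
    also have "\<bar>\<dots>\<bar> \<le> e" using main s by (simp add: abs_div pos_divide_le_eq mult.commute)
    finally show "\<bar>(g (x + s *\<^sub>R u + s *\<^sub>R v) - g (x + s *\<^sub>R u) - g (x + s *\<^sub>R v) + g x) / s\<^sup>2
        - D (\<lambda>y. D g y u) x v\<bar> \<le> e" unfolding L_def G_def .
  qed
qed

lemma schwarz:
  fixes g :: "'a::euclidean_space \<Rightarrow> real"
  assumes U: "open U" "x \<in> U" and dg: "\<forall>y\<in>U. g differentiable (at y)"
    and dGu: "(\<lambda>y. D g y u) differentiable (at x)"
    and dGv: "(\<lambda>y. D g y v) differentiable (at x)"
  shows "D (\<lambda>y. D g y u) x v = D (\<lambda>y. D g y v) x u"
proof (rule ccontr)
  define a where "a = D (\<lambda>y. D g y u) x v"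
  define b where "b = D (\<lambda>y. D g y v) x u"
  assume "a \<noteq> b" hence e: "\<bar>a - b\<bar> / 3 > 0" unfolding a_def b_def by simp
  obtain d1 where d1: "d1 > 0" "\<forall>s. 0 < s \<and> s < d1 \<longrightarrow>
     \<bar>(g (x + s *\<^sub>R u + s *\<^sub>R v) - g (x + s *\<^sub>R u) - g (x + s *\<^sub>R v) + g x) / s\<^sup>2 - a\<bar> \<le> \<bar>a - b\<bar> / 3"
    using schwarz_aux[OF U dg dGu e] unfolding a_def by blast
  obtain d2 where d2: "d2 > 0" "\<forall>s. 0 < s \<and> s < d2 \<longrightarrow>
     \<bar>(g (x + s *\<^sub>R v + s *\<^sub>R u) - g (x + s *\<^sub>R v) - g (x + s *\<^sub>R u) + g x) / s\<^sup>2 - b\<bar> \<le> \<bar>a - b\<bar> / 3"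
    using schwarz_aux[OF U dg dGv e] unfolding b_def by blast
  define s where "s = min d1 d2 / 2"
  have s: "0 < s" "s < d1" "s < d2" using d1 d2 unfolding s_def by auto
  have eq: "x + s *\<^sub>R v + s *\<^sub>R u = x + s *\<^sub>R u + s *\<^sub>R v" by (simp add: algebra_simps)
  have A: "\<bar>(g (x + s *\<^sub>R u + s *\<^sub>R v) - g (x + s *\<^sub>R u) - g (x + s *\<^sub>R v) + g x) / s\<^sup>2 - a\<bar> \<le> \<bar>a - b\<bar> / 3"
    using d1 s by blast
  have B: "\<bar>(g (x + s *\<^sub>R u + s *\<^sub>R v) - g (x + s *\<^sub>R u) - g (x + s *\<^sub>R v) + g x) / s\<^sup>2 - b\<bar> \<le> \<bar>a - b\<bar> / 3"
    using d2 s eq by (simp add: algebra_simps)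
  define Q where "Q = (g (x + s *\<^sub>R u + s *\<^sub>R v) - g (x + s *\<^sub>R u) - g (x + s *\<^sub>R v) + g x) / s\<^sup>2"
  have "\<bar>a - b\<bar> \<le> \<bar>Q - a\<bar> + \<bar>Q - b\<bar>" by arith
  with A B have "\<bar>a - b\<bar> \<le> 2 * (\<bar>a - b\<bar> / 3)" unfolding Q_def by linarith
  thus False using e by (simp add: field_simps)
qed


lemma lin_rep: "linear L \<Longrightarrow> L x = (\<Sum>b\<in>Basis. (x \<bullet> b) *\<^sub>R L b)"
proof -
  assume L: "linear L"
  have "L x = L (\<Sum>b\<in>Basis. (x \<bullet> b) *\<^sub>R b)" by (simp add: euclidean_representation)
  also have "\<dots> = (\<Sum>b\<in>Basis. (x \<bullet> b) *\<^sub>R L b)" using L by (simp add: linear_sum linear_cmul)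
  finally show ?thesis .
qed

lemma D_cong_open:
  assumes "open U" "x \<in> U" "\<And>y. y \<in> U \<Longrightarrow> f y = g y"
  shows "D f x = D g x"
proof -
  have "(\<lambda>f'. (f has_derivative f') (at x)) = (\<lambda>f'. (g has_derivative f') (at x))"
  proof
    fix f'
    show "(f has_derivative f') (at x) = (g has_derivative f') (at x)"
      using has_derivative_transform_within_open[of f f' x UNIV U g]
        has_derivative_transform_within_open[of g f' x UNIV U f] assms by auto
  qed
  thus ?thesis unfolding D_def frechet_derivative_def by simp
qed

definition dT :: "('a::real_normed_vector \<Rightarrow> 'b \<Rightarrow> 'c::real_normed_vector) \<Rightarrow> 'a \<Rightarrow> 'a \<Rightarrow> 'b \<Rightarrow> 'c" where
  "dT G x h w = D (\<lambda>y. G y w) x h"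

lemma app_has_derivative:
  fixes G :: "'a::euclidean_space \<Rightarrow> 'b::euclidean_space \<Rightarrow> 'c::real_normed_vector"
  assumes U: "open U" "x \<in> U" and lin: "\<forall>y\<in>U. linear (G y)"
    and dG: "\<forall>b\<in>Basis. ((\<lambda>y. G y b) has_derivative G' b) (at x)"
    and dX: "(X has_derivative X') (at x)"
  shows "((\<lambda>y. G y (X y)) has_derivative (\<lambda>h. G x (X' h) + (\<Sum>b\<in>Basis. (X x \<bullet> b) *\<^sub>R G' b h))) (at x)"
proof -
  have 1: "((\<lambda>y. \<Sum>b\<in>Basis. (X y \<bullet> b) *\<^sub>R G y b) has_derivative
           (\<lambda>h. \<Sum>b\<in>Basis. (X x \<bullet> b) *\<^sub>R G' b h + (X' h \<bullet> b) *\<^sub>R G x b)) (at x)"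
    using dG dX by (auto intro!: derivative_eq_intros)
  have 2: "(\<lambda>h. \<Sum>b\<in>Basis. (X x \<bullet> b) *\<^sub>R G' b h + (X' h \<bullet> b) *\<^sub>R G x b)
         = (\<lambda>h. G x (X' h) + (\<Sum>b\<in>Basis. (X x \<bullet> b) *\<^sub>R G' b h))"
  proof -
    have Gx: "linear (G x)" using lin U by auto
    show ?thesis by (simp add: sum.distrib lin_rep[OF Gx, symmetric] add.commute)
  qed
  show ?thesis
    by (rule has_derivative_transform_within_open[OF 1[unfolded 2] U])
       (metis lin lin_rep)
qed

lemma dT_works:
  fixes G :: "'a::euclidean_space \<Rightarrow> 'b::euclidean_space \<Rightarrow> 'c::real_normed_vector"
  assumes U: "open U" "x \<in> U" and lin: "\<forall>y\<in>U. linear (G y)"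
    and dG: "\<forall>b\<in>Basis. (\<lambda>y. G y b) differentiable (at x)"
  shows "((\<lambda>y. G y w) has_derivative (\<lambda>h. \<Sum>b\<in>Basis. (w \<bullet> b) *\<^sub>R dT G x h b)) (at x)"
proof -
  have 1: "((\<lambda>y. \<Sum>b\<in>Basis. (w \<bullet> b) *\<^sub>R G y b) has_derivative (\<lambda>h. \<Sum>b\<in>Basis. (w \<bullet> b) *\<^sub>R dT G x h b)) (at x)"
    unfolding dT_def using dG D_works by (auto intro!: derivative_eq_intros)
  show ?thesis
    by (rule has_derivative_transform_within_open[OF 1 U]) (metis lin lin_rep)
qed

lemma dT_lin:
  fixes G :: "'a::euclidean_space \<Rightarrow> 'b::euclidean_space \<Rightarrow> 'c::real_normed_vector"
  assumes U: "open U" "x \<in> U" and lin: "\<forall>y\<in>U. linear (G y)"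
    and dG: "\<forall>b\<in>Basis. (\<lambda>y. G y b) differentiable (at x)"
  shows "dT G x h w = (\<Sum>b\<in>Basis. (w \<bullet> b) *\<^sub>R dT G x h b)"
  using D_eq[OF dT_works[OF assms, of w]] unfolding dT_def[of G x h w] by simp

lemma tv_has_derivative:
  fixes S :: "'a::euclidean_space \<Rightarrow> 'a \<Rightarrow> 'a"
  assumes U: "open U" "x \<in> U" and lin: "\<forall>y\<in>U. linear (S y)"
    and dS: "\<forall>b\<in>Basis. (\<lambda>y. S y b) differentiable (at x)"
    and dX: "X differentiable (at x)"
  shows "(tv S X has_derivative (\<lambda>h. S x (D X x h) + dT S x h (X x))) (at x)"
proof -
  have "((\<lambda>y. S y (X y)) has_derivative (\<lambda>h. S x (D X x h) + (\<Sum>b\<in>Basis. (X x \<bullet> b) *\<^sub>R dT S x h b))) (at x)"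
  proof (rule app_has_derivative[OF U lin, where G'="\<lambda>b h. dT S x h b" and X'="D X x"])
    show "\<forall>b\<in>Basis. ((\<lambda>y. S y b) has_derivative (\<lambda>h. dT S x h b)) (at x)"
      unfolding dT_def using dS by (auto intro: D_works)
    show "(X has_derivative D X x) (at x)" using dX D_works by blast
  qed
  thus ?thesis unfolding tv_def by (simp only: dT_lin[OF U lin dS, symmetric])
qed

definition TS :: "('a::euclidean_space \<Rightarrow> 'a \<Rightarrow> 'a) \<Rightarrow> 'a \<Rightarrow> 'a \<Rightarrow> 'a \<Rightarrow> 'a" where
  "TS S x u v = dT S x (S x u) v - dT S x (S x v) u + S x (dT S x v u) - S x (dT S x u v)"

lemma nijenhuis_TS:
  fixes S :: "'a::euclidean_space \<Rightarrow> 'a \<Rightarrow> 'a"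
  assumes U: "open U" "x \<in> U" and lin: "\<forall>y\<in>U. linear (S y)"
    and dS: "\<forall>b\<in>Basis. (\<lambda>y. S y b) differentiable (at x)"
    and dX: "X differentiable (at x)" and dY: "Y differentiable (at x)"
  shows "nijenhuis S X Y x = TS S x (X x) (Y x)"
proof -
  have l: "linear (S x)" using lin U by auto
  have DX: "D (tv S X) x = (\<lambda>h. S x (D X x h) + dT S x h (X x))"
    using D_eq tv_has_derivative[OF U lin dS dX] by blast
  have DY: "D (tv S Y) x = (\<lambda>h. S x (D Y x h) + dT S x h (Y x))"
    using D_eq tv_has_derivative[OF U lin dS dY] by blast
  show ?thesis
  proof -
    have "nijenhuis S X Y x = D (tv S Y) x (S x (X x)) - D (tv S X) x (S x (Y x))
       + S x (S x (D Y x (X x) - D X x (Y x))) - S x (D Y x (S x (X x)) - D (tv S X) x (Y x))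
       - S x (D (tv S Y) x (X x) - D X x (S x (Y x)))"
      by (simp add: nijenhuis_def lie_bracket_def tv_def)
    also have "\<dots> = S x (D Y x (S x (X x))) + dT S x (S x (X x)) (Y x) - (S x (D X x (S x (Y x))) + dT S x (S x (Y x)) (X x))
       + (S x (S x (D Y x (X x))) - S x (S x (D X x (Y x)))) - (S x (D Y x (S x (X x))) - (S x (S x (D X x (Y x))) + S x (dT S x (Y x) (X x))))
       - (S x (S x (D Y x (X x))) + S x (dT S x (X x) (Y x)) - S x (D X x (S x (Y x))))"
      unfolding DX DY by (simp only: linear_add[OF l] linear_diff[OF l])
    also have "\<dots> = TS S x (X x) (Y x)" unfolding TS_def by (simp add: algebra_simps)
    finally show ?thesis .
  qed
qed


lemma tadj_inner:
  assumes "linear (S x)"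
  shows "tadj S x \<alpha> \<bullet> v = \<alpha> \<bullet> S x v"
proof -
  have "tadj S x \<alpha> \<bullet> v = (\<Sum>b\<in>Basis. (\<alpha> \<bullet> S x b) * (b \<bullet> v))"
    unfolding tadj_def by (simp add: inner_sum_left)
  also have "\<dots> = \<alpha> \<bullet> (\<Sum>b\<in>Basis. (v \<bullet> b) *\<^sub>R S x b)"
    by (simp add: inner_sum_right inner_commute mult.commute)
  also have "\<dots> = \<alpha> \<bullet> S x v" using lin_rep[OF assms, of v] by simp
  finally show ?thesis .
qed

definition MC :: "('a::euclidean_space \<Rightarrow> 'a \<Rightarrow> 'a) \<Rightarrow> ('a \<Rightarrow> 'a) \<Rightarrow> 'a \<Rightarrow> 'a \<Rightarrow> 'a \<Rightarrow> 'a" where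
  "MC N Pc x s w = dT N x (Pc s) w - Pc (\<Sum>b\<in>Basis. (s \<bullet> dT N x w b) *\<^sub>R b)
      + Pc (\<Sum>b\<in>Basis. (s \<bullet> dT N x b w) *\<^sub>R b)"

lemma mm_MC:
  fixes N :: "'a::euclidean_space \<Rightarrow> 'a \<Rightarrow> 'a" and Pc :: "'a \<Rightarrow> 'a"
  assumes U: "open U" "x \<in> U" and lin: "\<forall>y\<in>U. linear (N y)"
    and dN: "\<forall>b\<in>Basis. (\<lambda>y. N y b) differentiable (at x)"
    and linP: "linear Pc" and comm: "\<forall>\<alpha>. Pc (tadj N x \<alpha>) = N x (Pc \<alpha>)"
    and ds: "\<sigma> differentiable (at x)" and dZ: "Z differentiable (at x)"
  shows "mm_concomitant (\<lambda>y. Pc) N \<sigma> Z x = MC N Pc x (\<sigma> x) (Z x)"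
proof -
  have l: "linear (N x)" using lin U by auto
  have blP: "bounded_linear Pc" using linP linear_conv_bounded_linear by blast
  have dNb: "((\<lambda>y. N y b) has_derivative (\<lambda>h. dT N x h b)) (at x)" if "b \<in> Basis" for b
    unfolding dT_def using dN that by (auto intro: D_works)
  have Dsig: "(\<sigma> has_derivative D \<sigma> x) (at x)" using ds D_works by blast
  have DP: "D (pmap (\<lambda>y. Pc) \<sigma>) x = (\<lambda>h. Pc (D \<sigma> x h))"
    unfolding pmap_def by (rule D_eq) (rule bounded_linear.has_derivative[OF blP Dsig])
  have DNZ: "D (tv N Z) x = (\<lambda>h. N x (D Z x h) + dT N x h (Z x))"
    using D_eq tv_has_derivative[OF U lin dN dZ] by blast
  have Dtf: "D (tf N \<sigma>) x = (\<lambda>h. \<Sum>b\<in>Basis. (D \<sigma> x h \<bullet> N x b + \<sigma> x \<bullet> dT N x h b) *\<^sub>R b)"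
  proof (rule D_eq)
    have e: "tf N \<sigma> = (\<lambda>y. \<Sum>b\<in>Basis. (\<sigma> y \<bullet> N y b) *\<^sub>R b)"
      by (rule ext) (simp add: tf_def tadj_def)
    show "(tf N \<sigma> has_derivative (\<lambda>h. \<Sum>b\<in>Basis. (D \<sigma> x h \<bullet> N x b + \<sigma> x \<bullet> dT N x h b) *\<^sub>R b)) (at x)"
      unfolding e
      by (rule has_derivative_sum, rule has_derivative_scaleR_left, rule has_derivative_eq_rhs,
          rule has_derivative_inner[OF Dsig dNb]) (auto simp: algebra_simps)
  qed
  define A1 where "A1 = (\<Sum>b\<in>Basis. (D \<sigma> x (Z x) \<bullet> N x b) *\<^sub>R b)"
  define A2 where "A2 = (\<Sum>b\<in>Basis. (\<sigma> x \<bullet> dT N x (Z x) b) *\<^sub>R b)"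
  define A3 where "A3 = (\<Sum>b\<in>Basis. (\<sigma> x \<bullet> N x (D Z x b)) *\<^sub>R b)"
  define A4 where "A4 = (\<Sum>b\<in>Basis. (\<sigma> x \<bullet> dT N x b (Z x)) *\<^sub>R b)"
  have LF1: "lie_form Z (tf N \<sigma>) x = A1 + A2 + A3"
  proof -
    have "lie_form Z (tf N \<sigma>) x = (\<Sum>b\<in>Basis. (D \<sigma> x (Z x) \<bullet> N x b + \<sigma> x \<bullet> dT N x (Z x) b) *\<^sub>R b)
        + (\<Sum>b\<in>Basis. (tf N \<sigma> x \<bullet> D Z x b) *\<^sub>R b)"
      unfolding lie_form_def Dtf by simp
    also have "(\<Sum>b\<in>Basis. (tf N \<sigma> x \<bullet> D Z x b) *\<^sub>R b) = A3"
      unfolding A3_def tf_def using tadj_inner[of N x, OF l] by simp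
    finally show ?thesis unfolding A1_def A2_def by (simp add: scaleR_add_left sum.distrib)
  qed
  have LF2: "lie_form (tv N Z) \<sigma> x = D \<sigma> x (N x (Z x)) + A3 + A4"
    unfolding lie_form_def DNZ A3_def A4_def
    by (simp add: tv_def inner_add_right scaleR_add_left sum.distrib add.assoc)
  have A1c: "Pc A1 = N x (Pc (D \<sigma> x (Z x)))"
    using comm unfolding A1_def tadj_def by metis
  have "mm_concomitant (\<lambda>y. Pc) N \<sigma> Z x =
      (N x (D Z x (Pc (\<sigma> x))) + dT N x (Pc (\<sigma> x)) (Z x)) - Pc (D \<sigma> x (N x (Z x)))
      - N x (D Z x (Pc (\<sigma> x)) - Pc (D \<sigma> x (Z x)))
      - Pc (A1 + A2 + A3) + Pc (D \<sigma> x (N x (Z x)) + A3 + A4)"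
    unfolding mm_concomitant_def lie_tensor_app_def LF1 LF2
    by (simp add: lie_bracket_def DP DNZ pmap_def tv_def LF1 LF2)
  also have "\<dots> = dT N x (Pc (\<sigma> x)) (Z x) - Pc A2 + Pc A4"
    by (simp add: linear_add[OF linP] linear_diff[OF linP] linear_diff[OF l] A1c algebra_simps)
  also have "\<dots> = MC N Pc x (\<sigma> x) (Z x)" unfolding MC_def A2_def A4_def by simp
  finally show ?thesis .
qed


definition C2 :: "'a::real_normed_vector set \<Rightarrow> ('a \<Rightarrow> 'b::real_normed_vector) \<Rightarrow> bool" where
  "C2 U f = ((\<forall>y\<in>U. f differentiable (at y)) \<and> (\<forall>v. \<forall>y\<in>U. (\<lambda>y. D f y v) differentiable (at y)))"

lemma smooth_C2: "smooth_on U f \<Longrightarrow> C2 U f"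
  unfolding smooth_on_def C2_def
  by (drule spec[of _ "Suc (Suc 0)"]) simp

lemma smooth_diff: "smooth_on U f \<Longrightarrow> y \<in> U \<Longrightarrow> f differentiable (at y)"
  using smooth_C2 C2_def by blast

definition hess :: "('a::real_normed_vector \<Rightarrow> real) \<Rightarrow> 'a \<Rightarrow> 'a \<Rightarrow> 'a \<Rightarrow> real" where
  "hess g x u w = D (\<lambda>y. D g y w) x u"

lemma grad_inner:
  assumes "g differentiable (at y)"
  shows "grad g y \<bullet> v = D g y v"
proof -
  have "D g y v = (\<Sum>b\<in>Basis. (v \<bullet> b) *\<^sub>R D g y b)" using lin_rep D_linear[OF assms] by blast
  thus ?thesis unfolding grad_def by (simp add: inner_sum_left inner_sum_right inner_commute mult.commute)
qed

lemma hess_works: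
  fixes g :: "'a::euclidean_space \<Rightarrow> real"
  assumes U: "open U" "x \<in> U" and g: "C2 U g"
  shows "((\<lambda>y. D g y w) has_derivative (\<lambda>u. \<Sum>b\<in>Basis. (w \<bullet> b) * hess g x u b)) (at x)"
proof -
  have 1: "((\<lambda>y. \<Sum>b\<in>Basis. (w \<bullet> b) * D g y b) has_derivative (\<lambda>u. \<Sum>b\<in>Basis. (w \<bullet> b) * hess g x u b)) (at x)"
    unfolding hess_def using g U unfolding C2_def by (auto intro!: derivative_eq_intros D_works)
  show ?thesis
  proof (rule has_derivative_transform_within_open[OF 1 U])
    fix y assume "y \<in> U"
    hence "linear (D g y)" using g unfolding C2_def by (auto intro: D_linear)
    thus "(\<Sum>b\<in>Basis. (w \<bullet> b) * D g y b) = D g y w" using lin_rep[of "D g y" w] by simp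
  qed
qed

lemma hess_lin2:
  fixes g :: "'a::euclidean_space \<Rightarrow> real"
  assumes U: "open U" "x \<in> U" and g: "C2 U g"
  shows "hess g x u w = (\<Sum>b\<in>Basis. (w \<bullet> b) * hess g x u b)"
  using D_eq[OF hess_works[OF U g, of w]] unfolding hess_def[of g x u w] by simp

lemma hess_sym:
  fixes g :: "'a::euclidean_space \<Rightarrow> real"
  assumes U: "open U" "x \<in> U" and g: "C2 U g"
  shows "hess g x u w = hess g x w u"
  unfolding hess_def
  by (rule schwarz[OF U]) (use g U in \<open>auto simp: C2_def\<close>)

lemma grad_has_derivative:
  fixes g :: "'a::euclidean_space \<Rightarrow> real"
  assumes U: "open U" "x \<in> U" and g: "C2 U g"
  shows "(grad g has_derivative (\<lambda>v. \<Sum>b\<in>Basis. hess g x v b *\<^sub>R b)) (at x)"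
proof -
  have "grad g = (\<lambda>y. \<Sum>b\<in>Basis. D g y b *\<^sub>R b)" by (rule ext) (simp add: grad_def)
  moreover have "((\<lambda>y. \<Sum>b\<in>Basis. D g y b *\<^sub>R b) has_derivative (\<lambda>v. \<Sum>b\<in>Basis. hess g x v b *\<^sub>R b)) (at x)"
    unfolding hess_def using g U unfolding C2_def by (auto intro!: derivative_eq_intros D_works)
  ultimately show ?thesis by simp
qed

lemma hvec_inner:
  fixes g :: "'a::euclidean_space \<Rightarrow> real"
  assumes U: "open U" "x \<in> U" and g: "C2 U g"
  shows "(\<Sum>b\<in>Basis. hess g x v b *\<^sub>R b) \<bullet> w = hess g x v w"
  using hess_lin2[OF U g, of v w] by (simp add: inner_sum_left inner_sum_right inner_commute mult.commute)

lemma pbr_has_derivative: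
  fixes g h :: "'a::euclidean_space \<Rightarrow> real"
  assumes U: "open U" "x \<in> U" and g: "C2 U g" and h: "C2 U h" and linP: "linear Pc"
  shows "(pbracket (\<lambda>y. Pc) g h has_derivative
      (\<lambda>v. Pc (\<Sum>b\<in>Basis. hess g x v b *\<^sub>R b) \<bullet> grad h x + Pc (grad g x) \<bullet> (\<Sum>b\<in>Basis. hess h x v b *\<^sub>R b))) (at x)"
proof -
  have blP: "bounded_linear Pc" using linP linear_conv_bounded_linear by blast
  have e: "pbracket (\<lambda>y. Pc) g h = (\<lambda>y. Pc (grad g y) \<bullet> grad h y)" by (rule ext) (simp add: pbracket_def)
  show ?thesis unfolding e
    by (rule has_derivative_eq_rhs, rule has_derivative_inner,
        rule bounded_linear.has_derivative[OF blP grad_has_derivative[OF U g]],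
        rule grad_has_derivative[OF U h]) (auto simp: inner_commute add.commute)
qed

lemma pbr_outer:
  fixes f g h :: "'a::euclidean_space \<Rightarrow> real"
  assumes U: "open U" "x \<in> U" and f: "C2 U f" and g: "C2 U g" and h: "C2 U h" and linP: "linear Pc"
    and anti: "\<forall>a b. Pc a \<bullet> b = - (a \<bullet> Pc b)"
  shows "pbracket (\<lambda>y. Pc) f (pbracket (\<lambda>y. Pc) g h) x =
     - hess g x (Pc (grad f x)) (Pc (grad h x)) + hess h x (Pc (grad f x)) (Pc (grad g x))"
proof -
  have d: "pbracket (\<lambda>y. Pc) g h differentiable (at x)"
    using pbr_has_derivative[OF U g h linP] unfolding differentiable_def by blast
  have "pbracket (\<lambda>y. Pc) f (pbracket (\<lambda>y. Pc) g h) x = D (pbracket (\<lambda>y. Pc) g h) x (Pc (grad f x))"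
    unfolding pbracket_def[of _ f] using grad_inner[OF d] by (simp add: inner_commute)
  also have "\<dots> = Pc (\<Sum>b\<in>Basis. hess g x (Pc (grad f x)) b *\<^sub>R b) \<bullet> grad h x
      + Pc (grad g x) \<bullet> (\<Sum>b\<in>Basis. hess h x (Pc (grad f x)) b *\<^sub>R b)"
    using D_eq[OF pbr_has_derivative[OF U g h linP]] by simp
  also have "\<dots> = - hess g x (Pc (grad f x)) (Pc (grad h x)) + hess h x (Pc (grad f x)) (Pc (grad g x))"
    using anti hvec_inner[OF U g] hvec_inner[OF U h] by (simp add: inner_commute)
  finally show ?thesis .
qed

lemma jacobi:
  fixes f g h :: "'a::euclidean_space \<Rightarrow> real"
  assumes U: "open U" "x \<in> U" and f: "C2 U f" and g: "C2 U g" and h: "C2 U h" and linP: "linear Pc"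
    and anti: "\<forall>a b. Pc a \<bullet> b = - (a \<bullet> Pc b)"
  shows "pbracket (\<lambda>y. Pc) f (pbracket (\<lambda>y. Pc) g h) x + pbracket (\<lambda>y. Pc) g (pbracket (\<lambda>y. Pc) h f) x
       + pbracket (\<lambda>y. Pc) h (pbracket (\<lambda>y. Pc) f g) x = 0"
  unfolding pbr_outer[OF U f g h linP anti] pbr_outer[OF U g h f linP anti] pbr_outer[OF U h f g linP anti]
  using hess_sym[OF U f] hess_sym[OF U g] hess_sym[OF U h] by simp


definition iq :: "'q::euclidean_space \<Rightarrow> real \<times> 'q" where "iq k = (0, k)"
definition base :: "real \<times> 'q::euclidean_space \<times> 'q \<Rightarrow> real \<times> 'q" where "base \<xi> = (fst \<xi>, fst (snd \<xi>))"
definition fib :: "real \<times> 'q::euclidean_space \<times> 'q \<Rightarrow> 'q" where "fib \<xi> = snd (snd \<xi>)"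

lemma iq_add[simp]: "iq (a + b) = iq a + iq b" and iq_diff[simp]: "iq (a - b) = iq a - iq b"
  and iq_minus[simp]: "iq (- a) = - iq a" and iq_scale[simp]: "iq (c *\<^sub>R a) = c *\<^sub>R iq a"
  and iq_zero[simp]: "iq 0 = 0"
  by (simp_all add: iq_def zero_prod_def)

lemma base_add[simp]: "base (a + b) = base a + base b" and base_diff[simp]: "base (a - b) = base a - base b"
  and base_minus[simp]: "base (- a) = - base a" and base_scale[simp]: "base (c *\<^sub>R a) = c *\<^sub>R base a"
  and base_zero[simp]: "base 0 = 0" and base_Pair0[simp]: "base (0, y, z) = iq y"
  by (simp_all add: base_def iq_def zero_prod_def)

lemma base_Pair: "base (x, y, z) = (x, y)" by (simp add: base_def)

lemma fib_add[simp]: "fib (a + b) = fib a + fib b" and fib_diff[simp]: "fib (a - b) = fib a - fib b"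
  and fib_minus[simp]: "fib (- a) = - fib a" and fib_scale[simp]: "fib (c *\<^sub>R a) = c *\<^sub>R fib a"
  and fib_zero[simp]: "fib 0 = 0" and fib_Pair[simp]: "fib (x, y, z) = z"
  by (simp_all add: fib_def)

lemma J_eqI:
  fixes x y :: "real \<times> 'q::euclidean_space \<times> 'q"
  assumes "fst x = fst y" "fst (snd x) = fst (snd y)" "\<And>k. fib x \<bullet> k = fib y \<bullet> k"
  shows "x = y"
proof -
  have "fib x = fib y" using assms(3) by (metis euclidean_eqI)
  thus ?thesis using assms(1,2) unfolding fib_def by (simp add: prod_eq_iff)
qed

lemma sumk_inner:
  fixes g :: "'q::euclidean_space \<Rightarrow> real"
  assumes "\<And>a b. g (a + b) = g a + g b" "\<And>c a. g (c *\<^sub>R a) = c * g a"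
  shows "(\<Sum>k\<in>Basis. g k *\<^sub>R k) \<bullet> a = g a"
proof -
  have "linear g" by (rule linearI) (use assms in auto)
  hence "g a = (\<Sum>k\<in>Basis. (a \<bullet> k) *\<^sub>R g k)" by (rule lin_rep)
  thus ?thesis by (simp add: inner_sum_left inner_sum_right inner_commute mult.commute)
qed

lemma adj_inner:
  assumes "linear L"
  shows "(\<Sum>b\<in>Basis. (s \<bullet> L b) *\<^sub>R b) \<bullet> v = s \<bullet> L v"
proof -
  have "(\<Sum>b\<in>Basis. (s \<bullet> L b) *\<^sub>R b) \<bullet> v = (\<Sum>b\<in>Basis. (s \<bullet> L b) * (b \<bullet> v))"
    by (simp add: inner_sum_left)
  also have "\<dots> = s \<bullet> (\<Sum>b\<in>Basis. (v \<bullet> b) *\<^sub>R L b)"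
    by (simp add: inner_sum_right inner_commute mult.commute)
  also have "\<dots> = s \<bullet> L v" using lin_rep[OF assms, of v] by simp
  finally show ?thesis .
qed

lemma comp_q: "fst (snd y) \<bullet> k = y \<bullet> ((0::real), k, (0::'q::euclidean_space))"
  by (cases y) simp
lemma comp_f: "fib y \<bullet> k = y \<bullet> ((0::real), (0::'q::euclidean_space), k)"
  by (cases y) (simp add: fib_def)
lemma inner_J: "(x::real \<times> 'q::euclidean_space \<times> 'q) \<bullet> y = fst x * fst y + fst (snd x) \<bullet> fst (snd y) + fib x \<bullet> fib y"
  by (cases x; cases y) (simp add: fib_def)

lemma cP_fst[simp]: "fst (canonical_P z \<alpha>) = 0" and cP_q[simp]: "fst (snd (canonical_P z \<alpha>)) = - fib \<alpha>"
  and cP_fib[simp]: "fib (canonical_P z \<alpha>) = fst (snd \<alpha>)" and cP_base[simp]: "base (canonical_P z \<alpha>) = iq (- fib \<alpha>)"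
  by (simp_all add: canonical_P_def fib_def base_def iq_def)

locale LA =
  fixes rr :: "real \<times> 'q::euclidean_space \<Rightarrow> 'q"
    and r1 :: "real \<times> 'q \<Rightarrow> real \<times> 'q \<Rightarrow> 'q"
    and r2 :: "real \<times> 'q \<Rightarrow> real \<times> 'q \<Rightarrow> real \<times> 'q \<Rightarrow> 'q"
    and p :: 'q
  assumes rr_add: "rr (a + b) = rr a + rr b" and rr_scale: "rr (c *\<^sub>R a) = c *\<^sub>R rr a"
    and r1_add1: "r1 (a + b) w = r1 a w + r1 b w" and r1_scale1: "r1 (c *\<^sub>R a) w = c *\<^sub>R r1 a w"
    and r1_add2: "r1 h (a + b) = r1 h a + r1 h b" and r1_scale2: "r1 h (c *\<^sub>R a) = c *\<^sub>R r1 h a"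
    and r2_add1: "r2 (a + b) v w = r2 a v w + r2 b v w" and r2_scale1: "r2 (c *\<^sub>R a) v w = c *\<^sub>R r2 a v w"
    and r2_add2: "r2 h (a + b) w = r2 h a w + r2 h b w" and r2_scale2: "r2 h (c *\<^sub>R a) w = c *\<^sub>R r2 h a w"
    and r2_add3: "r2 h v (a + b) = r2 h v a + r2 h v b" and r2_scale3: "r2 h v (c *\<^sub>R a) = c *\<^sub>R r2 h v a"
    and r2_sym: "r2 a b w = r2 b a w"
begin

lemma rr_lin: "linear rr" by (rule linearI) (simp_all add: rr_add rr_scale)
lemma r1_lin1: "linear (\<lambda>a. r1 a w)" by (rule linearI) (simp_all add: r1_add1 r1_scale1)
lemma r1_lin2: "linear (r1 h)" by (rule linearI) (simp_all add: r1_add2 r1_scale2)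
lemma r2_lin1: "linear (\<lambda>a. r2 a v w)" by (rule linearI) (simp_all add: r2_add1 r2_scale1)
lemma r2_lin2: "linear (\<lambda>a. r2 h a w)" by (rule linearI) (simp_all add: r2_add2 r2_scale2)
lemma r2_lin3: "linear (r2 h v)" by (rule linearI) (simp_all add: r2_add3 r2_scale3)

lemmas rr_simps = rr_add rr_scale linear_diff[OF rr_lin] linear_neg[OF rr_lin] linear_0[OF rr_lin]
lemmas r1_simps = r1_add1 r1_scale1 r1_add2 r1_scale2
  linear_diff[OF r1_lin1] linear_neg[OF r1_lin1] linear_0[OF r1_lin1]
  linear_diff[OF r1_lin2] linear_neg[OF r1_lin2] linear_0[OF r1_lin2]
lemmas r2_simps = r2_add1 r2_scale1 r2_add2 r2_scale2 r2_add3 r2_scale3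
  linear_diff[OF r2_lin1] linear_neg[OF r2_lin1] linear_0[OF r2_lin1]
  linear_diff[OF r2_lin2] linear_neg[OF r2_lin2] linear_0[OF r2_lin2]
  linear_diff[OF r2_lin3] linear_neg[OF r2_lin3] linear_0[OF r2_lin3]
lemmas lin_simps = rr_simps r1_simps r2_simps

definition liftL :: "real \<times> 'q \<times> 'q \<Rightarrow> real \<times> 'q \<times> 'q" where
  "liftL \<xi> = (0, rr (base \<xi>), \<Sum>k\<in>Basis. (fib \<xi> \<bullet> rr (iq k) + p \<bullet> r1 (base \<xi>) (iq k) - p \<bullet> r1 (iq k) (base \<xi>)) *\<^sub>R k)"

definition dLiftL :: "real \<times> 'q \<times> 'q \<Rightarrow> real \<times> 'q \<times> 'q \<Rightarrow> real \<times> 'q \<times> 'q" where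
  "dLiftL \<eta> \<xi> = (0, r1 (base \<eta>) (base \<xi>), \<Sum>k\<in>Basis. (fib \<xi> \<bullet> r1 (base \<eta>) (iq k) + fib \<eta> \<bullet> r1 (base \<xi>) (iq k)
      - fib \<eta> \<bullet> r1 (iq k) (base \<xi>) + p \<bullet> r2 (base \<eta>) (base \<xi>) (iq k) - p \<bullet> r2 (base \<eta>) (iq k) (base \<xi>)) *\<^sub>R k)"

lemma fst_liftL[simp]: "fst (liftL \<xi>) = 0" by (simp add: liftL_def)
lemma q_liftL[simp]: "fst (snd (liftL \<xi>)) = rr (base \<xi>)" by (simp add: liftL_def)
lemma base_liftL[simp]: "base (liftL \<xi>) = iq (rr (base \<xi>))" by (simp add: liftL_def)
lemma fib_liftL[simp]: "fib (liftL \<xi>) \<bullet> a = fib \<xi> \<bullet> rr (iq a) + p \<bullet> r1 (base \<xi>) (iq a) - p \<bullet> r1 (iq a) (base \<xi>)"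
  unfolding liftL_def fib_Pair
  by (rule sumk_inner) (simp_all add: lin_simps inner_add_right inner_diff_right algebra_simps)
lemma fib_liftL'[simp]: "a \<bullet> fib (liftL \<xi>) = fib \<xi> \<bullet> rr (iq a) + p \<bullet> r1 (base \<xi>) (iq a) - p \<bullet> r1 (iq a) (base \<xi>)"
  using fib_liftL by (simp add: inner_commute)

lemma fst_dLiftL[simp]: "fst (dLiftL \<eta> \<xi>) = 0" by (simp add: dLiftL_def)
lemma q_dLiftL[simp]: "fst (snd (dLiftL \<eta> \<xi>)) = r1 (base \<eta>) (base \<xi>)" by (simp add: dLiftL_def)
lemma base_dLiftL[simp]: "base (dLiftL \<eta> \<xi>) = iq (r1 (base \<eta>) (base \<xi>))" by (simp add: dLiftL_def)
lemma fib_dLiftL[simp]: "fib (dLiftL \<eta> \<xi>) \<bullet> a = fib \<xi> \<bullet> r1 (base \<eta>) (iq a) + fib \<eta> \<bullet> r1 (base \<xi>) (iq a)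
      - fib \<eta> \<bullet> r1 (iq a) (base \<xi>) + p \<bullet> r2 (base \<eta>) (base \<xi>) (iq a) - p \<bullet> r2 (base \<eta>) (iq a) (base \<xi>)"
  unfolding dLiftL_def fib_Pair
  by (rule sumk_inner) (simp_all add: lin_simps inner_add_right inner_diff_right algebra_simps)
lemma fib_dLiftL'[simp]: "a \<bullet> fib (dLiftL \<eta> \<xi>) = fib \<xi> \<bullet> r1 (base \<eta>) (iq a) + fib \<eta> \<bullet> r1 (base \<xi>) (iq a)
      - fib \<eta> \<bullet> r1 (iq a) (base \<xi>) + p \<bullet> r2 (base \<eta>) (base \<xi>) (iq a) - p \<bullet> r2 (base \<eta>) (iq a) (base \<xi>)"
  using fib_dLiftL by (simp add: inner_commute)

definition NE :: "real \<times> 'q \<Rightarrow> real \<times> 'q \<Rightarrow> 'q" where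
  "NE B C = r1 (iq (rr B)) C - r1 (iq (rr C)) B + rr (iq (r1 C B)) - rr (iq (r1 B C))"

definition DN :: "real \<times> 'q \<Rightarrow> real \<times> 'q \<Rightarrow> real \<times> 'q \<Rightarrow> 'q" where
  "DN A B C = r2 A (iq (rr B)) C + r1 (iq (r1 A B)) C - r2 A (iq (rr C)) B - r1 (iq (r1 A C)) B
     + r1 A (iq (r1 C B)) + rr (iq (r2 A C B)) - r1 A (iq (r1 B C)) - rr (iq (r2 A B C))"

definition TSL :: "real \<times> 'q \<times> 'q \<Rightarrow> real \<times> 'q \<times> 'q \<Rightarrow> real \<times> 'q \<times> 'q" where
  "TSL \<xi>1 \<xi>2 = dLiftL (liftL \<xi>1) \<xi>2 - dLiftL (liftL \<xi>2) \<xi>1 + liftL (dLiftL \<xi>2 \<xi>1) - liftL (dLiftL \<xi>1 \<xi>2)"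

lemma TSL_fst: "fst (TSL \<xi>1 \<xi>2) = 0" by (simp add: TSL_def)

lemma TSL_base: "base (TSL \<xi>1 \<xi>2) = iq (NE (base \<xi>1) (base \<xi>2))"
  by (simp add: TSL_def NE_def lin_simps)

lemma TSL_fib: "fib (TSL \<xi>1 \<xi>2) \<bullet> k =
   - (p \<bullet> DN (iq k) (base \<xi>1) (base \<xi>2) + p \<bullet> DN (base \<xi>1) (base \<xi>2) (iq k) + p \<bullet> DN (base \<xi>2) (iq k) (base \<xi>1))
   + fib \<xi>2 \<bullet> NE (base \<xi>1) (iq k) - fib \<xi>1 \<bullet> NE (base \<xi>2) (iq k)"
  by (simp add: TSL_def NE_def DN_def lin_simps inner_add_right inner_diff_right inner_add_left inner_diff_left r2_sym)


lemma lin_liftL: "linear liftL"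
  by (rule linearI; rule J_eqI) (simp_all add: lin_simps inner_add_left algebra_simps)
lemma lin_dLiftL2: "linear (dLiftL \<eta>)"
  by (rule linearI; rule J_eqI) (simp_all add: lin_simps inner_add_left algebra_simps)
lemma lin_dLiftL1: "linear (\<lambda>\<eta>. dLiftL \<eta> \<xi>)"
  by (rule linearI; rule J_eqI) (simp_all add: lin_simps inner_add_left algebra_simps)

definition MCL :: "real \<times> 'q \<times> 'q \<Rightarrow> real \<times> 'q \<times> 'q \<Rightarrow> real \<times> 'q \<times> 'q" where
  "MCL s \<xi> = dLiftL (canonical_P 0 s) \<xi> - canonical_P 0 (\<Sum>b\<in>Basis. (s \<bullet> dLiftL \<xi> b) *\<^sub>R b)
      + canonical_P 0 (\<Sum>b\<in>Basis. (s \<bullet> dLiftL b \<xi>) *\<^sub>R b)"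

lemma MCL_zero: "MCL s \<xi> = 0"
proof -
  define y1 where "y1 = (\<Sum>b\<in>Basis. (s \<bullet> dLiftL \<xi> b) *\<^sub>R b)"
  define y2 where "y2 = (\<Sum>b\<in>Basis. (s \<bullet> dLiftL b \<xi>) *\<^sub>R b)"
  have a1: "y1 \<bullet> v = s \<bullet> dLiftL \<xi> v" for v unfolding y1_def by (rule adj_inner[OF lin_dLiftL2])
  have a2: "y2 \<bullet> v = s \<bullet> dLiftL v \<xi>" for v unfolding y2_def by (rule adj_inner[OF lin_dLiftL1])
  have f1: "fib y1 \<bullet> k = s \<bullet> dLiftL \<xi> (0, 0, k)" for k using a1 comp_f by metis
  have q1: "fst (snd y1) \<bullet> k = s \<bullet> dLiftL \<xi> (0, k, 0)" for k using a1 comp_q by metis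
  have f2: "fib y2 \<bullet> k = s \<bullet> dLiftL (0, 0, k) \<xi>" for k using a2 comp_f by metis
  have q2: "fst (snd y2) \<bullet> k = s \<bullet> dLiftL (0, k, 0) \<xi>" for k using a2 comp_q by metis
  show ?thesis
  proof (rule J_eqI)
    show "fst (MCL s \<xi>) = fst (0::real \<times> 'q \<times> 'q)" by (simp add: MCL_def)
    show "fst (snd (MCL s \<xi>)) = fst (snd (0::real \<times> 'q \<times> 'q))"
    proof (rule euclidean_eqI)
      fix k :: 'q assume "k \<in> Basis"
      have "fst (snd (MCL s \<xi>)) \<bullet> k = r1 (iq (- fib s)) (base \<xi>) \<bullet> k + fib y1 \<bullet> k - fib y2 \<bullet> k"
        unfolding MCL_def y1_def[symmetric] y2_def[symmetric]
        by (simp add: inner_add_left inner_diff_left)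
      also have "\<dots> = 0" unfolding f1 f2
        by (simp add: inner_J lin_simps inner_add_right inner_diff_right inner_add_left inner_diff_left r2_sym inner_commute)
      finally show "fst (snd (MCL s \<xi>)) \<bullet> k = fst (snd (0::real \<times> 'q \<times> 'q)) \<bullet> k" by simp
    qed
    fix k :: 'q
    have "fib (MCL s \<xi>) \<bullet> k = fib (dLiftL (canonical_P 0 s) \<xi>) \<bullet> k - fst (snd y1) \<bullet> k + fst (snd y2) \<bullet> k"
      unfolding MCL_def y1_def[symmetric] y2_def[symmetric]
      by (simp add: canonical_P_def inner_add_left inner_diff_left)
    also have "\<dots> = 0" unfolding q1 q2
      by (simp add: inner_J lin_simps inner_add_right inner_diff_right inner_add_left inner_diff_left r2_sym inner_commute)
    finally show "fib (MCL s \<xi>) \<bullet> k = fib 0 \<bullet> k" by simp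
  qed
qed

lemma comm_L: "canonical_P 0 (\<Sum>b\<in>Basis. (\<alpha> \<bullet> liftL b) *\<^sub>R b) = liftL (canonical_P 0 \<alpha>)"
proof -
  define y where "y = (\<Sum>b\<in>Basis. (\<alpha> \<bullet> liftL b) *\<^sub>R b)"
  have a: "y \<bullet> v = \<alpha> \<bullet> liftL v" for v unfolding y_def by (rule adj_inner[OF lin_liftL])
  have f: "fib y \<bullet> k = \<alpha> \<bullet> liftL (0, 0, k)" for k using a comp_f by metis
  have q: "fst (snd y) \<bullet> k = \<alpha> \<bullet> liftL (0, k, 0)" for k using a comp_q by metis
  show ?thesis unfolding y_def[symmetric]
  proof (rule J_eqI)
    show "fst (canonical_P 0 y) = fst (liftL (canonical_P 0 \<alpha>))" by simp
    show "fst (snd (canonical_P 0 y)) = fst (snd (liftL (canonical_P 0 \<alpha>)))"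
    proof (rule euclidean_eqI)
      fix k :: 'q assume "k \<in> Basis"
      have "fst (snd (canonical_P 0 y)) \<bullet> k = - (fib y \<bullet> k)" by simp
      also have "\<dots> = fst (snd (liftL (canonical_P 0 \<alpha>))) \<bullet> k" unfolding f
        by (simp add: inner_J lin_simps inner_add_right inner_diff_right inner_add_left inner_diff_left inner_commute)
      finally show "fst (snd (canonical_P 0 y)) \<bullet> k = fst (snd (liftL (canonical_P 0 \<alpha>))) \<bullet> k" .
    qed
    fix k :: 'q
    have "fib (canonical_P 0 y) \<bullet> k = fst (snd y) \<bullet> k" by simp
    also have "\<dots> = fib (liftL (canonical_P 0 \<alpha>)) \<bullet> k" unfolding q
      by (simp add: inner_J lin_simps inner_add_right inner_diff_right inner_add_left inner_diff_left inner_commute)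
    finally show "fib (canonical_P 0 y) \<bullet> k = fib (liftL (canonical_P 0 \<alpha>)) \<bullet> k" .
  qed
qed
end


definition lform :: "('q::euclidean_space \<Rightarrow> 'q \<Rightarrow> real) \<Rightarrow> ('q \<Rightarrow> real) \<Rightarrow> real \<times> 'q \<Rightarrow> 'q" where
  "lform c d w = (\<Sum>i\<in>Basis. ((\<Sum>j\<in>Basis. c i j * (snd w \<bullet> j)) + d i * fst w) *\<^sub>R i)"

lemma lform_add: "lform c d (a + b) = lform c d a + lform c d b"
  unfolding lform_def by (simp add: inner_add_left distrib_left sum.distrib scaleR_add_left)

lemma lform_scale: "lform c d (r *\<^sub>R a) = r *\<^sub>R lform c d a"
  unfolding lform_def by (simp add: scaleR_sum_right sum_distrib_left algebra_simps)

lemma lform_cong_add: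
  assumes "\<forall>i\<in>Basis. \<forall>j\<in>Basis. c i j = c1 i j + c2 i j" "\<forall>i\<in>Basis. d i = d1 i + d2 i"
  shows "lform c d w = lform c1 d1 w + lform c2 d2 w"
  unfolding lform_def using assms
  by (simp add: distrib_right sum.distrib scaleR_add_left algebra_simps)

lemma lform_cong_scale:
  assumes "\<forall>i\<in>Basis. \<forall>j\<in>Basis. c i j = r * c1 i j" "\<forall>i\<in>Basis. d i = r * d1 i"
  shows "lform c d w = r *\<^sub>R lform c1 d1 w"
  unfolding lform_def using assms
  by (simp add: scaleR_sum_right sum_distrib_left algebra_simps)

lemma lform_cong:
  assumes "\<forall>i\<in>Basis. \<forall>j\<in>Basis. c i j = c1 i j" "\<forall>i\<in>Basis. d i = d1 i"
  shows "lform c d w = lform c1 d1 w"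
  unfolding lform_def using assms by simp

definition rrc :: "(real \<times> 'q::euclidean_space \<Rightarrow> 'q \<Rightarrow> 'q \<Rightarrow> real) \<Rightarrow> (real \<times> 'q \<Rightarrow> 'q \<Rightarrow> real) \<Rightarrow> real \<times> 'q \<Rightarrow> real \<times> 'q \<Rightarrow> 'q" where
  "rrc Rc R0 e = lform (\<lambda>i j. Rc e i j) (\<lambda>i. R0 e i)"
definition r1c :: "(real \<times> 'q::euclidean_space \<Rightarrow> 'q \<Rightarrow> 'q \<Rightarrow> real) \<Rightarrow> (real \<times> 'q \<Rightarrow> 'q \<Rightarrow> real) \<Rightarrow> real \<times> 'q \<Rightarrow> real \<times> 'q \<Rightarrow> real \<times> 'q \<Rightarrow> 'q" where
  "r1c Rc R0 e h = lform (\<lambda>i j. D (\<lambda>e. Rc e i j) e h) (\<lambda>i. D (\<lambda>e. R0 e i) e h)"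
definition r2c :: "(real \<times> 'q::euclidean_space \<Rightarrow> 'q \<Rightarrow> 'q \<Rightarrow> real) \<Rightarrow> (real \<times> 'q \<Rightarrow> 'q \<Rightarrow> real) \<Rightarrow> real \<times> 'q \<Rightarrow> real \<times> 'q \<Rightarrow> real \<times> 'q \<Rightarrow> real \<times> 'q \<Rightarrow> 'q" where
  "r2c Rc R0 e h1 h2 = lform (\<lambda>i j. hess (\<lambda>e. Rc e i j) e h1 h2) (\<lambda>i. hess (\<lambda>e. R0 e i) e h1 h2)"

lemma J_eqI_B:
  fixes x y :: "real \<times> 'q::euclidean_space \<times> 'q"
  assumes "fst x = fst y" "fst (snd x) = fst (snd y)" "\<And>k. k \<in> Basis \<Longrightarrow> fib x \<bullet> k = fib y \<bullet> k"
  shows "x = y"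
proof -
  have "fib x = fib y" using assms(3) by (metis euclidean_eqI)
  thus ?thesis using assms(1,2) unfolding fib_def by (simp add: prod_eq_iff)
qed

lemma sum_basis_inner:
  fixes k :: "'q::euclidean_space"
  assumes "k \<in> Basis"
  shows "(\<Sum>j\<in>Basis. f j *\<^sub>R j) \<bullet> k = f k"
  using assms by (simp add: inner_sum_left inner_Basis if_distrib[of "\<lambda>x. f _ * x"] sum.delta cong: if_cong)

lemma lform_iq:
  fixes k :: "'q::euclidean_space"
  assumes "k \<in> Basis"
  shows "lform c d (iq k) = (\<Sum>i\<in>Basis. c i k *\<^sub>R i)"
proof -
  have "(\<Sum>j\<in>Basis. c i j * (k \<bullet> j)) = c i k" for i
    using assms by (simp add: inner_Basis if_distrib[of "\<lambda>x. c _ _ * x"] sum.delta cong: if_cong)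
  thus ?thesis unfolding lform_def iq_def by simp
qed

lemma Dlin_V:
  fixes g :: "real \<times> 'q::euclidean_space \<Rightarrow> real"
  assumes "g differentiable (at e)"
  shows "D g e w = fst w * dt_E g e + (\<Sum>k\<in>Basis. (snd w \<bullet> k) * dq_E k g e)"
proof -
  have l: "linear (D g e)" using D_linear[OF assms] .
  have l2: "linear (\<lambda>x. D g e (0, x))"
  proof (rule linearI)
    fix a b :: 'q show "D g e (0, a + b) = D g e (0, a) + D g e (0, b)"
      using linear_add[OF l, of "(0, a)" "(0, b)"] by simp
  next
    fix c :: real and x :: 'q show "D g e (0, c *\<^sub>R x) = c *\<^sub>R D g e (0, x)"
      using linear_cmul[OF l, of c "(0, x)"] by simp
  qed
  have w_eq: "fst w *\<^sub>R (1, 0) + (0, snd w) = w" by (simp add: prod_eq_iff)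
  have c1: "D g e (fst w *\<^sub>R (1, 0)) = fst w * D g e (1, 0)"
    using linear_cmul[OF l, of "fst w" "(1, 0)"] by simp
  have "D g e w = D g e (fst w *\<^sub>R (1, 0)) + D g e (0, snd w)"
    using linear_add[OF l, of "fst w *\<^sub>R (1, 0)" "(0, snd w)"] unfolding w_eq .
  hence "D g e w = fst w * D g e (1, 0) + D g e (0, snd w)" unfolding c1 .
  also have "D g e (0, snd w) = (\<Sum>k\<in>Basis. (snd w \<bullet> k) * D g e (0, k))"
    using lin_rep[OF l2, of "snd w"] by simp
  finally show ?thesis unfolding dt_E_def dq_E_def .
qed

locale CC =
  fixes U :: "(real \<times> 'q::euclidean_space) set"
    and Rc :: "real \<times> 'q \<Rightarrow> 'q \<Rightarrow> 'q \<Rightarrow> real"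
    and R0 :: "real \<times> 'q \<Rightarrow> 'q \<Rightarrow> real"
  assumes U: "open U"
    and Rc: "\<forall>i\<in>Basis. \<forall>j\<in>Basis. C2 U (\<lambda>e. Rc e i j)"
    and R0: "\<forall>i\<in>Basis. C2 U (\<lambda>e. R0 e i)"
begin

lemma C2_d1: "C2 U g \<Longrightarrow> y \<in> U \<Longrightarrow> g differentiable (at y)"
  unfolding C2_def by blast
lemma C2_d2: "C2 U g \<Longrightarrow> y \<in> U \<Longrightarrow> (\<lambda>y. D g y v) differentiable (at y)"
  unfolding C2_def by blast
lemma C2_lin1: "C2 U g \<Longrightarrow> e \<in> U \<Longrightarrow> linear (D g e)"
  by (rule D_linear) (rule C2_d1)
lemma C2_lin2: "C2 U g \<Longrightarrow> e \<in> U \<Longrightarrow> linear (\<lambda>u. hess g e u w)"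
  unfolding hess_def by (rule D_linear[simplified eta_contract_eq]) (rule C2_d2)
lemma C2_lin3: "C2 U g \<Longrightarrow> e \<in> U \<Longrightarrow> linear (\<lambda>w. hess g e u w)"
  by (rule linearI) (simp_all add: hess_lin2[OF U] inner_add_left distrib_right sum.distrib sum_distrib_left algebra_simps)

lemma C2_add1: "C2 U g \<Longrightarrow> e \<in> U \<Longrightarrow> D g e (a + b) = D g e a + D g e b"
  using C2_lin1 linear_add by blast
lemma C2_scale1: "C2 U g \<Longrightarrow> e \<in> U \<Longrightarrow> D g e (c *\<^sub>R a) = c * D g e a"
  using C2_lin1 linear_cmul by (metis real_scaleR_def)
lemma C2_add2: "C2 U g \<Longrightarrow> e \<in> U \<Longrightarrow> hess g e (a + b) w = hess g e a w + hess g e b w"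
  using C2_lin2[of g e w] linear_add by blast
lemma C2_scale2: "C2 U g \<Longrightarrow> e \<in> U \<Longrightarrow> hess g e (c *\<^sub>R a) w = c * hess g e a w"
  using linear_cmul[OF C2_lin2[of g e w], of c a] by simp
lemma C2_add3: "C2 U g \<Longrightarrow> e \<in> U \<Longrightarrow> hess g e u (a + b) = hess g e u a + hess g e u b"
  using C2_lin3[of g e u] linear_add by blast
lemma C2_scale3: "C2 U g \<Longrightarrow> e \<in> U \<Longrightarrow> hess g e u (c *\<^sub>R a) = c * hess g e u a"
  using linear_cmul[OF C2_lin3[of g e u], of c a] by simp

lemma LA_inst:
  assumes e: "e \<in> U"
  shows "LA (rrc Rc R0 e) (r1c Rc R0 e) (r2c Rc R0 e)"
proof unfold_locales
  fix a b w h v :: "real \<times> 'q" and c :: real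
  show "rrc Rc R0 e (a + b) = rrc Rc R0 e a + rrc Rc R0 e b" by (simp add: rrc_def lform_add)
  show "rrc Rc R0 e (c *\<^sub>R a) = c *\<^sub>R rrc Rc R0 e a" by (simp add: rrc_def lform_scale)
  show "r1c Rc R0 e (a + b) w = r1c Rc R0 e a w + r1c Rc R0 e b w"
    unfolding r1c_def by (rule lform_cong_add) (use Rc R0 e in \<open>auto simp: C2_add1\<close>)
  show "r1c Rc R0 e (c *\<^sub>R a) w = c *\<^sub>R r1c Rc R0 e a w"
    unfolding r1c_def by (rule lform_cong_scale) (use Rc R0 e in \<open>auto simp: C2_scale1\<close>)
  show "r1c Rc R0 e h (a + b) = r1c Rc R0 e h a + r1c Rc R0 e h b" by (simp add: r1c_def lform_add)
  show "r1c Rc R0 e h (c *\<^sub>R a) = c *\<^sub>R r1c Rc R0 e h a" by (simp add: r1c_def lform_scale)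
  show "r2c Rc R0 e (a + b) v w = r2c Rc R0 e a v w + r2c Rc R0 e b v w"
    unfolding r2c_def by (rule lform_cong_add) (use Rc R0 e in \<open>auto simp: C2_add2\<close>)
  show "r2c Rc R0 e (c *\<^sub>R a) v w = c *\<^sub>R r2c Rc R0 e a v w"
    unfolding r2c_def by (rule lform_cong_scale) (use Rc R0 e in \<open>auto simp: C2_scale2\<close>)
  show "r2c Rc R0 e h (a + b) w = r2c Rc R0 e h a w + r2c Rc R0 e h b w"
    unfolding r2c_def by (rule lform_cong_add) (use Rc R0 e in \<open>auto simp: C2_add3\<close>)
  show "r2c Rc R0 e h (c *\<^sub>R a) w = c *\<^sub>R r2c Rc R0 e h a w"
    unfolding r2c_def by (rule lform_cong_scale) (use Rc R0 e in \<open>auto simp: C2_scale3\<close>)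
  show "r2c Rc R0 e h v (a + b) = r2c Rc R0 e h v a + r2c Rc R0 e h v b" by (simp add: r2c_def lform_add)
  show "r2c Rc R0 e h v (c *\<^sub>R a) = c *\<^sub>R r2c Rc R0 e h v a" by (simp add: r2c_def lform_scale)
  show "r2c Rc R0 e a b w = r2c Rc R0 e b a w"
    unfolding r2c_def by (rule lform_cong) (use Rc R0 hess_sym[OF U e] in auto)
qed

lemma rr_deriv:
  assumes e: "e \<in> U"
  shows "((\<lambda>e'. rrc Rc R0 e' w) has_derivative (\<lambda>h. r1c Rc R0 e h w)) (at e)"
  unfolding rrc_def r1c_def lform_def
  using Rc R0 e
  by (auto intro!: derivative_eq_intros D_works C2_d1)

lemma r1_deriv:
  assumes e: "e \<in> U"
  shows "((\<lambda>e'. r1c Rc R0 e' h w) has_derivative (\<lambda>h1. r2c Rc R0 e h1 h w)) (at e)"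
  unfolding r1c_def r2c_def lform_def hess_def
  using Rc R0 e
  by (auto intro!: derivative_eq_intros D_works C2_d2)


lemma lift_eq:
  assumes z: "base z \<in> U"
  shows "complete_lift Rc R0 z \<xi> = LA.liftL (rrc Rc R0 (base z)) (r1c Rc R0 (base z)) (fib z) \<xi>"
proof -
  interpret L: LA "rrc Rc R0 (base z)" "r1c Rc R0 (base z)" "r2c Rc R0 (base z)" "fib z"
    by (rule LA_inst[OF z])
  obtain t q p where zz: "z = (t, q, p)" by (cases z) auto
  obtain w0 wq wp where xx: "\<xi> = (w0, wq, wp)" by (cases \<xi>) auto
  define e where "e = (t, q)"
  have be: "base z = e" unfolding zz e_def by (simp add: base_def)
  have eU: "e \<in> U" using z be by simp
  have dR: "(\<lambda>e. Rc e i j) differentiable (at e)" if "i \<in> Basis" "j \<in> Basis" for i j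
    using Rc that eU C2_d1 by blast
  show ?thesis
  proof (rule J_eqI_B)
    show "fst (complete_lift Rc R0 z \<xi>) = fst (L.liftL \<xi>)" by (simp add: complete_lift_def Let_def)
    show "fst (snd (complete_lift Rc R0 z \<xi>)) = fst (snd (L.liftL \<xi>))"
      unfolding L.q_liftL by (simp add: complete_lift_def Let_def rrc_def lform_def base_def)
    fix k :: 'q assume k: "k \<in> Basis"
    have lhs: "fib (complete_lift Rc R0 z \<xi>) \<bullet> k =
       (\<Sum>i\<in>Basis. Rc e i k * (wp \<bullet> i))
       + (\<Sum>i\<in>Basis. \<Sum>k'\<in>Basis. (p \<bullet> i) * (dq_E k' (\<lambda>e'. Rc e' i k) e - dq_E k (\<lambda>e'. Rc e' i k') e) * (wq \<bullet> k'))
       + (\<Sum>i\<in>Basis. (p \<bullet> i) * (dt_E (\<lambda>e'. Rc e' i k) e - dq_E k (\<lambda>e'. R0 e' i) e) * w0)"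
      unfolding zz xx e_def complete_lift_def Let_def fib_Pair
      apply (simp only: fst_conv snd_conv)
      by (rule sum_basis_inner[OF k])
    have r0: "rrc Rc R0 e (iq k) = (\<Sum>i\<in>Basis. Rc e i k *\<^sub>R i)"
      unfolding rrc_def by (rule lform_iq[OF k])
    have r1a: "r1c Rc R0 e (w0, wq) (iq k) = (\<Sum>i\<in>Basis. (w0 * dt_E (\<lambda>e'. Rc e' i k) e
        + (\<Sum>k'\<in>Basis. (wq \<bullet> k') * dq_E k' (\<lambda>e'. Rc e' i k) e)) *\<^sub>R i)"
      unfolding r1c_def lform_iq[OF k] using Dlin_V[OF dR[OF _ k]] by simp
    have r1b: "r1c Rc R0 e (iq k) (w0, wq) = (\<Sum>i\<in>Basis. ((\<Sum>j\<in>Basis. dq_E k (\<lambda>e'. Rc e' i j) e * (wq \<bullet> j))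
        + dq_E k (\<lambda>e'. R0 e' i) e * w0) *\<^sub>R i)"
      unfolding r1c_def lform_def dq_E_def iq_def by simp
    have "fib (L.liftL \<xi>) \<bullet> k = fib \<xi> \<bullet> rrc Rc R0 e (iq k) + fib z \<bullet> r1c Rc R0 e (base \<xi>) (iq k) - fib z \<bullet> r1c Rc R0 e (iq k) (base \<xi>)"
      using L.fib_liftL[of \<xi> k] unfolding be .
    also have "\<dots> = wp \<bullet> rrc Rc R0 e (iq k) + p \<bullet> r1c Rc R0 e (w0, wq) (iq k) - p \<bullet> r1c Rc R0 e (iq k) (w0, wq)"
      by (simp add: xx zz base_Pair)
    also have "\<dots> = fib (complete_lift Rc R0 z \<xi>) \<bullet> k"
      unfolding lhs r0 r1a r1b
      by (simp add: inner_sum_right inner_commute sum_distrib_left sum_subtractf sum.distrib algebra_simps)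
    finally show "fib (complete_lift Rc R0 z \<xi>) \<bullet> k = fib (L.liftL \<xi>) \<bullet> k" by simp
  qed
qed

lemma base_hd: "(base has_derivative base) (at z)"
  unfolding base_def[abs_def] by (auto intro!: derivative_eq_intros)

lemma fib_hd: "(fib has_derivative fib) (at z)"
  unfolding fib_def[abs_def] by (auto intro!: derivative_eq_intros)

lemma open_J: "open {z. base z \<in> U}"
proof -
  have "continuous_on UNIV base" using base_hd has_derivative_continuous continuous_at_imp_continuous_on by blast
  thus ?thesis using U open_vimage[of U base] by (simp add: vimage_def)
qed

lemma lift_deriv:
  assumes z: "base z \<in> U"
  shows "((\<lambda>z'. complete_lift Rc R0 z' \<xi>) has_derivative
          (\<lambda>\<eta>. LA.dLiftL (r1c Rc R0 (base z)) (r2c Rc R0 (base z)) (fib z) \<eta> \<xi>)) (at z)"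
proof -
  define e where "e = base z"
  have rrb: "((\<lambda>z'. rrc Rc R0 (base z') w) has_derivative (\<lambda>\<eta>. r1c Rc R0 e (base \<eta>) w)) (at z)" for w
    using diff_chain_at[OF base_hd rr_deriv[OF z, of w]] unfolding e_def by (simp add: o_def)
  have r1b: "((\<lambda>z'. r1c Rc R0 (base z') h w) has_derivative (\<lambda>\<eta>. r2c Rc R0 e (base \<eta>) h w)) (at z)" for h w
    using diff_chain_at[OF base_hd r1_deriv[OF z, of h w]] unfolding e_def by (simp add: o_def)
  define E where "E = (\<lambda>z'. ((0::real), rrc Rc R0 (base z') (base \<xi>),
     \<Sum>k\<in>Basis. (fib \<xi> \<bullet> rrc Rc R0 (base z') (iq k) + fib z' \<bullet> r1c Rc R0 (base z') (base \<xi>) (iq k)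
        - fib z' \<bullet> r1c Rc R0 (base z') (iq k) (base \<xi>)) *\<^sub>R k))"
  have Eeq: "complete_lift Rc R0 z' \<xi> = E z'" if "z' \<in> {z. base z \<in> U}" for z'
    using lift_eq[of z' \<xi>] LA.liftL_def[OF LA_inst, of "base z'" "fib z'" \<xi>] that unfolding E_def by simp
  have dE: "LA.dLiftL (r1c Rc R0 e) (r2c Rc R0 e) (fib z) \<eta> \<xi> = ((0::real), r1c Rc R0 e (base \<eta>) (base \<xi>),
     \<Sum>k\<in>Basis. (fib \<xi> \<bullet> r1c Rc R0 e (base \<eta>) (iq k) + fib \<eta> \<bullet> r1c Rc R0 e (base \<xi>) (iq k)
      - fib \<eta> \<bullet> r1c Rc R0 e (iq k) (base \<xi>) + fib z \<bullet> r2c Rc R0 e (base \<eta>) (base \<xi>) (iq k)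
      - fib z \<bullet> r2c Rc R0 e (base \<eta>) (iq k) (base \<xi>)) *\<^sub>R k)" for \<eta>
    using LA.dLiftL_def[OF LA_inst[OF z[folded e_def]]] by simp
  have E: "(E has_derivative (\<lambda>\<eta>. LA.dLiftL (r1c Rc R0 e) (r2c Rc R0 e) (fib z) \<eta> \<xi>)) (at z)"
    unfolding dE E_def
    apply (rule has_derivative_eq_rhs)
     apply (rule has_derivative_Pair has_derivative_const has_derivative_sum has_derivative_scaleR_left
        has_derivative_add has_derivative_diff has_derivative_inner rrb r1b fib_hd | assumption)+
    apply (rule ext)
    apply (simp add: algebra_simps e_def)
    done
  show ?thesis
    by (rule has_derivative_transform_within_open[OF E[unfolded e_def] open_J])
       (use z Eeq in auto)
qed

lemma dT_lift:
  assumes z: "base z \<in> U"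
  shows "dT (complete_lift Rc R0) z \<eta> \<xi> = LA.dLiftL (r1c Rc R0 (base z)) (r2c Rc R0 (base z)) (fib z) \<eta> \<xi>"
  unfolding dT_def using D_eq[OF lift_deriv[OF z]] by simp

lemma tensorE_eq: "tensorE Rc R0 e w = iq (rrc Rc R0 e w)"
  by (simp add: tensorE_def rrc_def lform_def iq_def)

lemma tensorE_deriv:
  assumes e: "e \<in> U"
  shows "((\<lambda>e'. tensorE Rc R0 e' w) has_derivative (\<lambda>h. iq (r1c Rc R0 e h w))) (at e)"
  unfolding tensorE_eq iq_def
  by (auto intro!: derivative_eq_intros rr_deriv[OF e])

lemma dT_tensorE:
  assumes e: "e \<in> U"
  shows "dT (tensorE Rc R0) e h w = iq (r1c Rc R0 e h w)"
  unfolding dT_def using D_eq[OF tensorE_deriv[OF e]] by simp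

lemma iq_hd:
  assumes "(g has_derivative g') (at x)"
  shows "((\<lambda>x. iq (g x)) has_derivative (\<lambda>h. iq (g' h))) (at x)"
  unfolding iq_def by (rule has_derivative_Pair[OF has_derivative_const assms])

lemma NE_deriv:
  assumes e: "e \<in> U"
  shows "((\<lambda>e'. r1c Rc R0 e' (iq (rrc Rc R0 e' B)) C - r1c Rc R0 e' (iq (rrc Rc R0 e' C)) B
     + rrc Rc R0 e' (iq (r1c Rc R0 e' C B)) - rrc Rc R0 e' (iq (r1c Rc R0 e' B C))) has_derivative
          (\<lambda>A. LA.DN (rrc Rc R0 e) (r1c Rc R0 e) (r2c Rc R0 e) A B C)) (at e)"
proof -
  interpret L: LA "rrc Rc R0 e" "r1c Rc R0 e" "r2c Rc R0 e" 0 by (rule LA_inst[OF e])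
  have linG1: "\<forall>y\<in>U. linear (\<lambda>x. r1c Rc R0 y x W)" for W
    using LA.r1_lin1[OF LA_inst] by blast
  have linG2: "\<forall>y\<in>U. linear (rrc Rc R0 y)"
    using LA.rr_lin[OF LA_inst] by blast
  have t1: "((\<lambda>e'. r1c Rc R0 e' (iq (rrc Rc R0 e' X)) W) has_derivative
            (\<lambda>A. r1c Rc R0 e (iq (r1c Rc R0 e A X)) W + r2c Rc R0 e A (iq (rrc Rc R0 e X)) W)) (at e)" for X W
  proof -
    have "((\<lambda>e'. r1c Rc R0 e' (iq (rrc Rc R0 e' X)) W) has_derivative
            (\<lambda>A. r1c Rc R0 e (iq (r1c Rc R0 e A X)) W + (\<Sum>b\<in>Basis. (iq (rrc Rc R0 e X) \<bullet> b) *\<^sub>R r2c Rc R0 e A b W))) (at e)"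
      by (rule app_has_derivative[OF U e linG1, where G'="\<lambda>b A. r2c Rc R0 e A b W"])
         (use r1_deriv[OF e] in \<open>auto intro: iq_hd rr_deriv[OF e]\<close>)
    moreover have "(\<Sum>b\<in>Basis. (iq (rrc Rc R0 e X) \<bullet> b) *\<^sub>R r2c Rc R0 e A b W) = r2c Rc R0 e A (iq (rrc Rc R0 e X)) W" for A
      using lin_rep[OF L.r2_lin2, symmetric] by blast
    ultimately show ?thesis by simp
  qed
  have t2: "((\<lambda>e'. rrc Rc R0 e' (iq (r1c Rc R0 e' X Y))) has_derivative
            (\<lambda>A. rrc Rc R0 e (iq (r2c Rc R0 e A X Y)) + r1c Rc R0 e A (iq (r1c Rc R0 e X Y)))) (at e)" for X Y
  proof -
    have "((\<lambda>e'. rrc Rc R0 e' (iq (r1c Rc R0 e' X Y))) has_derivative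
            (\<lambda>A. rrc Rc R0 e (iq (r2c Rc R0 e A X Y)) + (\<Sum>b\<in>Basis. (iq (r1c Rc R0 e X Y) \<bullet> b) *\<^sub>R r1c Rc R0 e A b))) (at e)"
      by (rule app_has_derivative[OF U e linG2, where G'="\<lambda>b A. r1c Rc R0 e A b"])
         (use rr_deriv[OF e] in \<open>auto intro: iq_hd r1_deriv[OF e]\<close>)
    moreover have "(\<Sum>b\<in>Basis. (iq (r1c Rc R0 e X Y) \<bullet> b) *\<^sub>R r1c Rc R0 e A b) = r1c Rc R0 e A (iq (r1c Rc R0 e X Y))" for A
      using lin_rep[OF L.r1_lin2, symmetric] by blast
    ultimately show ?thesis by simp
  qed
  show ?thesis
    unfolding LA.DN_def[OF LA_inst[OF e]]
    apply (rule has_derivative_eq_rhs)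
     apply (rule has_derivative_add has_derivative_diff t1 t2)+
    apply (rule ext)
    apply (simp add: algebra_simps)
    done
qed
end


lemma Ck_const: "Ck k U (\<lambda>x. c)"
proof (induction k arbitrary: c)
  case 0 thus ?case by simp
next
  case (Suc k)
  have dc: "D (\<lambda>x. c) x = (\<lambda>h. 0)" for x by (rule D_eq) (rule has_derivative_const)
  have "Ck k U (\<lambda>x. D (\<lambda>x. c) x v)" for v using Suc.IH[of 0] by (simp add: dc)
  thus ?case by simp
qed

lemma smooth_const: "smooth_on U (\<lambda>x. c)"
  unfolding smooth_on_def using Ck_const by blast

definition cPc :: "real \<times> 'q::euclidean_space \<times> 'q \<Rightarrow> real \<times> 'q \<times> 'q" where
  "cPc = canonical_P 0"

lemma cP_const: "canonical_P = (\<lambda>y. cPc)"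
  by (rule ext)+ (simp add: canonical_P_def cPc_def)

lemma cP_x: "canonical_P x = cPc"
  by (simp add: cP_const)

lemma cP_lin: "linear cPc"
  by (rule linearI) (simp_all add: canonical_P_def cPc_def)

lemma cP_anti: "cPc a \<bullet> b = - (a \<bullet> cPc b)"
  by (cases a; cases b) (simp add: canonical_P_def cPc_def inner_commute)

lemma J1_eq: "J1_over U = {z. base z \<in> U}"
  by (simp add: J1_over_def base_def)

lemma is_poisson_cP:
  assumes U: "open U"
  shows "is_poisson U canonical_P"
  unfolding is_poisson_def
proof (intro conjI ballI allI impI)
  fix x assume "x \<in> U"
  show "linear (canonical_P x)" unfolding cP_x by (rule cP_lin)
  fix \<alpha> \<beta> show "canonical_P x \<alpha> \<bullet> \<beta> = - (canonical_P x \<beta> \<bullet> \<alpha>)"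
    unfolding cP_x using cP_anti by (simp add: inner_commute)
next
  fix f g h :: "_ \<Rightarrow> real" and x assume fgh: "smooth_on U f \<and> smooth_on U g \<and> smooth_on U h" and x: "x \<in> U"
  show "pbracket canonical_P f (pbracket canonical_P g h) x + pbracket canonical_P g (pbracket canonical_P h f) x
        + pbracket canonical_P h (pbracket canonical_P f g) x = 0"
    unfolding cP_const
    by (rule jacobi[OF U x]) (use fgh smooth_C2 cP_lin cP_anti in auto)
qed

context CC
begin

abbreviation "J \<equiv> {z. base z \<in> U}"

lemma LAz: "base z \<in> U \<Longrightarrow> LA (rrc Rc R0 (base z)) (r1c Rc R0 (base z)) (r2c Rc R0 (base z))"
  by (rule LA_inst)

lemma lift_lin: "\<forall>y\<in>J. linear (complete_lift Rc R0 y)"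
proof
  fix y assume "y \<in> J"
  hence "complete_lift Rc R0 y = LA.liftL (rrc Rc R0 (base y)) (r1c Rc R0 (base y)) (fib y)"
    by (intro ext lift_eq) simp
  thus "linear (complete_lift Rc R0 y)" using LA.lin_liftL[OF LAz] \<open>y \<in> J\<close> by simp
qed

lemma lift_cols: "base z \<in> U \<Longrightarrow> \<forall>b\<in>Basis. (\<lambda>y. complete_lift Rc R0 y b) differentiable (at z)"
  using lift_deriv unfolding differentiable_def by blast

lemma tE_lin: "\<forall>y\<in>U. linear (tensorE Rc R0 y)"
proof
  fix y assume y: "y \<in> U"
  have "tensorE Rc R0 y = (\<lambda>w. iq (rrc Rc R0 y w))" by (rule ext) (simp add: tensorE_eq)
  moreover have "linear (\<lambda>w. iq (rrc Rc R0 y w))"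
  proof -
    have rl: "linear (rrc Rc R0 y)" using LA.rr_lin[OF LA_inst[OF y]] .
    show ?thesis by (rule linearI) (simp_all add: linear_add[OF rl] linear_cmul[OF rl])
  qed
  ultimately show "linear (tensorE Rc R0 y)" by simp
qed

lemma tE_cols: "e \<in> U \<Longrightarrow> \<forall>b\<in>Basis. (\<lambda>y. tensorE Rc R0 y b) differentiable (at e)"
  using tensorE_deriv unfolding differentiable_def by blast

definition NEx where
  "NEx e B C = r1c Rc R0 e (iq (rrc Rc R0 e B)) C - r1c Rc R0 e (iq (rrc Rc R0 e C)) B
     + rrc Rc R0 e (iq (r1c Rc R0 e C B)) - rrc Rc R0 e (iq (r1c Rc R0 e B C))"

lemma TS_tE:
  assumes e: "e \<in> U"
  shows "TS (tensorE Rc R0) e B C = iq (NEx e B C)"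
  unfolding TS_def dT_tensorE[OF e] tensorE_eq NEx_def by simp

lemma nij_tE:
  assumes e: "e \<in> U" and X: "X differentiable (at e)" and Y: "Y differentiable (at e)"
  shows "nijenhuis (tensorE Rc R0) X Y e = iq (NEx e (X e) (Y e))"
  using nijenhuis_TS[OF U e tE_lin tE_cols[OF e] X Y] TS_tE[OF e] by simp

lemma TS_lift:
  assumes z: "base z \<in> U"
  shows "TS (complete_lift Rc R0) z u v = LA.TSL (rrc Rc R0 (base z)) (r1c Rc R0 (base z)) (r2c Rc R0 (base z)) (fib z) u v"
  unfolding TS_def dT_lift[OF z] lift_eq[OF z] LA.TSL_def[OF LAz[OF z]] ..

lemma nij_lift:
  assumes z: "base z \<in> U" and X: "X differentiable (at z)" and Y: "Y differentiable (at z)"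
  shows "nijenhuis (complete_lift Rc R0) X Y z =
     LA.TSL (rrc Rc R0 (base z)) (r1c Rc R0 (base z)) (r2c Rc R0 (base z)) (fib z) (X z) (Y z)"
  using nijenhuis_TS[OF open_J _ lift_lin lift_cols[OF z] X Y] z TS_lift[OF z] by simp

lemma NE_eq: "e \<in> U \<Longrightarrow> LA.NE (rrc Rc R0 e) (r1c Rc R0 e) B C = NEx e B C"
  unfolding NEx_def by (rule LA.NE_def[OF LA_inst])

lemma iq_eq0: "iq x = 0 \<longleftrightarrow> x = 0" by (simp add: iq_def zero_prod_def)

lemma forward:
  assumes PN: "nijenhuis_zero J (complete_lift Rc R0)"
  shows "nijenhuis_zero U (tensorE Rc R0)"
  unfolding nijenhuis_zero_def
proof (intro allI impI ballI)
  fix X Y :: "real \<times> 'q \<Rightarrow> real \<times> 'q" and e assume XY: "smooth_on U X \<and> smooth_on U Y" and e: "e \<in> U"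
  define z where "z = (fst e, snd e, 0::'q)"
  have bz: "base z = e" unfolding z_def by (simp add: base_Pair)
  have zJ: "z \<in> J" using bz e by simp
  define \<xi>1 where "\<xi>1 = (fst (X e), snd (X e), 0::'q)"
  define \<xi>2 where "\<xi>2 = (fst (Y e), snd (Y e), 0::'q)"
  interpret L: LA "rrc Rc R0 e" "r1c Rc R0 e" "r2c Rc R0 e" "fib z" by (rule LA_inst[OF e])
  have "nijenhuis (complete_lift Rc R0) (\<lambda>_. \<xi>1) (\<lambda>_. \<xi>2) z = 0"
    using PN zJ smooth_const unfolding nijenhuis_zero_def by blast
  hence "L.TSL \<xi>1 \<xi>2 = 0" using nij_lift[of z "\<lambda>_. \<xi>1" "\<lambda>_. \<xi>2"] zJ bz by simp
  hence "base (L.TSL \<xi>1 \<xi>2) = 0" by simp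
  hence "L.NE (X e) (Y e) = 0" unfolding L.TSL_base \<xi>1_def \<xi>2_def by (simp add: base_Pair iq_eq0)
  hence "NEx e (X e) (Y e) = 0" using NE_eq[OF e] by simp
  moreover have "X differentiable (at e)" "Y differentiable (at e)" using XY e smooth_diff by blast+
  ultimately show "nijenhuis (tensorE Rc R0) X Y e = 0" using nij_tE[OF e] by simp
qed

lemma NEx_zero:
  assumes NZ: "nijenhuis_zero U (tensorE Rc R0)" and e: "e \<in> U"
  shows "NEx e B C = 0"
proof -
  have "nijenhuis (tensorE Rc R0) (\<lambda>_. B) (\<lambda>_. C) e = 0"
    using NZ e smooth_const unfolding nijenhuis_zero_def by blast
  thus ?thesis using nij_tE[OF e, of "\<lambda>_. B" "\<lambda>_. C"] by (simp add: iq_eq0)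
qed

lemma DN_zero:
  assumes NZ: "nijenhuis_zero U (tensorE Rc R0)" and e: "e \<in> U"
  shows "LA.DN (rrc Rc R0 e) (r1c Rc R0 e) (r2c Rc R0 e) A B C = 0"
proof -
  have "D (\<lambda>e'. NEx e' B C) e = (\<lambda>A. LA.DN (rrc Rc R0 e) (r1c Rc R0 e) (r2c Rc R0 e) A B C)"
    by (rule D_eq) (use NE_deriv[OF e, of B C] in \<open>simp add: NEx_def\<close>)
  moreover have "D (\<lambda>e'. NEx e' B C) e = D (\<lambda>e'. 0) e"
    by (rule D_cong_open[OF U e]) (use NEx_zero[OF NZ] in auto)
  moreover have "D (\<lambda>e'. 0::'q) e = (\<lambda>A. 0)" by (rule D_eq) (rule has_derivative_const)
  ultimately have "(\<lambda>A. LA.DN (rrc Rc R0 e) (r1c Rc R0 e) (r2c Rc R0 e) A B C) = (\<lambda>A. 0)" by simp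
  thus ?thesis by (metis)
qed

lemma backward:
  assumes NZ: "nijenhuis_zero U (tensorE Rc R0)"
  shows "poisson_nijenhuis J canonical_P (complete_lift Rc R0)"
  unfolding poisson_nijenhuis_def
proof (intro conjI)
  show "is_poisson J canonical_P" by (rule is_poisson_cP[OF open_J])
  show comm: "\<forall>x\<in>J. \<forall>\<alpha>. canonical_P x (tadj (complete_lift Rc R0) x \<alpha>) = complete_lift Rc R0 x (canonical_P x \<alpha>)"
  proof (intro ballI allI)
    fix x \<alpha> assume x: "x \<in> J"
    interpret L: LA "rrc Rc R0 (base x)" "r1c Rc R0 (base x)" "r2c Rc R0 (base x)" "fib x" using LAz x by simp
    have lx: "complete_lift Rc R0 x = L.liftL" using x by (intro ext lift_eq) simp
    show "canonical_P x (tadj (complete_lift Rc R0) x \<alpha>) = complete_lift Rc R0 x (canonical_P x \<alpha>)"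
      unfolding lx tadj_def cP_x using L.comm_L unfolding cPc_def[symmetric] by simp
  qed
  show "nijenhuis_zero J (complete_lift Rc R0)"
    unfolding nijenhuis_zero_def
  proof (intro allI impI ballI)
    fix X Y :: "real \<times> 'q \<times> 'q \<Rightarrow> real \<times> 'q \<times> 'q" and z assume XY: "smooth_on J X \<and> smooth_on J Y" and z: "z \<in> J"
    define e where "e = base z"
    have e: "e \<in> U" using z e_def by simp
    interpret L: LA "rrc Rc R0 e" "r1c Rc R0 e" "r2c Rc R0 e" "fib z" by (rule LA_inst[OF e])
    have dXY: "X differentiable (at z)" "Y differentiable (at z)" using XY z smooth_diff by blast+
    have NE0: "L.NE B C = 0" for B C using NE_eq[OF e] NEx_zero[OF NZ e] by simp
    have DN0: "L.DN A B C = 0" for A B C using DN_zero[OF NZ e] by simp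
    have "L.TSL (X z) (Y z) = 0"
    proof (rule J_eqI)
      show "fst (L.TSL (X z) (Y z)) = fst (0::real \<times> 'q \<times> 'q)" by (simp add: L.TSL_fst)
      have "base (L.TSL (X z) (Y z)) = 0" unfolding L.TSL_base NE0 by simp
      thus "fst (snd (L.TSL (X z) (Y z))) = fst (snd (0::real \<times> 'q \<times> 'q))"
        by (simp add: base_def zero_prod_def)
      fix k show "fib (L.TSL (X z) (Y z)) \<bullet> k = fib 0 \<bullet> k" unfolding L.TSL_fib NE0 DN0 by simp
    qed
    thus "nijenhuis (complete_lift Rc R0) X Y z = 0" using nij_lift[OF _ dXY] z unfolding e_def by simp
  qed
  show "\<forall>\<sigma> Z. smooth_on J \<sigma> \<and> smooth_on J Z \<longrightarrow> (\<forall>x\<in>J. mm_concomitant canonical_P (complete_lift Rc R0) \<sigma> Z x = 0)"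
  proof (intro allI impI ballI)
    fix \<sigma> Z :: "real \<times> 'q \<times> 'q \<Rightarrow> real \<times> 'q \<times> 'q" and x assume sZ: "smooth_on J \<sigma> \<and> smooth_on J Z" and x: "x \<in> J"
    interpret L: LA "rrc Rc R0 (base x)" "r1c Rc R0 (base x)" "r2c Rc R0 (base x)" "fib x" using LAz x by simp
    have d: "\<sigma> differentiable (at x)" "Z differentiable (at x)" using sZ x smooth_diff by blast+
    have cm: "\<forall>\<alpha>. cPc (tadj (complete_lift Rc R0) x \<alpha>) = complete_lift Rc R0 x (cPc \<alpha>)"
      using comm x unfolding cP_x by blast
    have "mm_concomitant canonical_P (complete_lift Rc R0) \<sigma> Z x = MC (complete_lift Rc R0) cPc x (\<sigma> x) (Z x)"
      unfolding cP_const by (rule mm_MC[OF open_J x lift_lin lift_cols cP_lin cm d]) (use x in simp)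
    also have "\<dots> = L.MCL (\<sigma> x) (Z x)"
      unfolding MC_def L.MCL_def dT_lift[OF x[simplified]] cPc_def ..
    also have "\<dots> = 0" by (rule L.MCL_zero)
    finally show "mm_concomitant canonical_P (complete_lift Rc R0) \<sigma> Z x = 0" .
  qed
qed

lemma main: "poisson_nijenhuis J canonical_P (complete_lift Rc R0) \<longleftrightarrow> nijenhuis_zero U (tensorE Rc R0)"
  using forward backward unfolding poisson_nijenhuis_def by blast

end

theorem theorem3:
  fixes U :: "(real \<times> 'q::euclidean_space) set"
    and Rc :: "real \<times> 'q \<Rightarrow> 'q \<Rightarrow> 'q \<Rightarrow> real"
    and R0 :: "real \<times> 'q \<Rightarrow> 'q \<Rightarrow> real"
  assumes "open U"
    and "\<forall>i\<in>Basis. \<forall>j\<in>Basis. smooth_on U (\<lambda>e. Rc e i j)"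
    and "\<forall>i\<in>Basis. smooth_on U (\<lambda>e. R0 e i)"
  shows "poisson_nijenhuis (J1_over U) canonical_P (complete_lift Rc R0)
         \<longleftrightarrow> nijenhuis_zero U (tensorE Rc R0)"
proof -
  interpret CC U Rc R0 by standard (use assms in \<open>auto intro!: smooth_C2\<close>)
  show ?thesis unfolding J1_eq by (rule main)
qed


end
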